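(* (a) If $A\in M_2(\mathbb R)$ is not normal, then $\mathcal M_{\mathbb R}(\exp A)<\|A\|_2$. (b) If $A\in M_2(\mathbb C)$ is not normal, then $\mathcal M_{\mathbb C}(\exp A)<\|A\|_2$.
   Context: $\|\cdot\|_2$ is the operator norm. For $\mathbb F\in\{\mathbb R,\mathbb C\}$ and $A\in M_n(\mathbb F)$, the Magnus exponent is $\mathcal M_{\mathbb F}(A)=\inf\{\sum_{i=1}^k\|B_i\|_2 : k\ge1,\ B_1,\dots,B_k\in M_n(\mathbb F),\ \exp(B_k)\cdots\exp(B_1)=A\}$ (with $\inf\emptyset=+\infty$); equivalently, the infimum of $\int\|\phi(\theta)\|_2\,\mathrm d\theta$ over integrable $M_n(\mathbb F)$-valued densities $\phi$ whose time-ordered exponential (the value at the endpoint of the solution of $Z'=\phi Z$, $Z(\text{start})=\mathrm{Id}$) equals $A$. *)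

theory Defs
  imports "HOL-Analysis.Analysis"
begin

primrec matpow :: "'a::semiring_1^'n^'n \<Rightarrow> nat \<Rightarrow> 'a^'n^'n" where
  "matpow A 0 = mat 1"
| "matpow A (Suc k) = A ** matpow A k"

definition mexp :: "'a::{real_normed_field,banach}^'n^'n \<Rightarrow> 'a^'n^'n" where
  "mexp A = (\<Sum>k. (1 / fact k) *\<^sub>R matpow A k)"

definition opnorm :: "'a::real_normed_field^'n^'n \<Rightarrow> real" where
  "opnorm A = onorm (\<lambda>x. A *v x)"

definition ctranspose :: "complex^'n^'m \<Rightarrow> complex^'m^'n" where
  "ctranspose A = (\<chi> i j. cnj (A $ j $ i))"

definition normal_real :: "real^'n^'n \<Rightarrow> bool" where
  "normal_real A \<longleftrightarrow> A ** transpose A = transpose A ** A"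

definition normal_complex :: "complex^'n^'n \<Rightarrow> bool" where
  "normal_complex A \<longleftrightarrow> A ** ctranspose A = ctranspose A ** A"

text \<open>Magnus exponent: infimum of \<open>\<Sum>\<^sub>i \<parallel>B\<^sub>i\<parallel>\<^sub>2\<close> over all finite nonempty lists
  \<open>[B\<^sub>1,\<dots>,B\<^sub>k]\<close> with \<open>exp B\<^sub>k \<cdots> exp B\<^sub>1 = A\<close>; infimum of the empty set is \<open>\<infinity>\<close>.
  The field is determined by the scalar type (real or complex).\<close>
definition magnus :: "'a::{real_normed_field,banach}^'n^'n \<Rightarrow> ereal" where
  "magnus A = Inf {ereal (\<Sum>B\<leftarrow>Bs. opnorm B) | Bs.
      Bs \<noteq> [] \<and> fold (\<lambda>B P. mexp B ** P) Bs (mat 1) = A}"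

end

theory Submission
  imports Defs
begin


definition M2 :: "'a \<Rightarrow> 'a \<Rightarrow> 'a \<Rightarrow> 'a \<Rightarrow> 'a^2^2" where
  "M2 a b c d = (\<chi> i j. if i = 1 then (if j = 1 then a else b) else (if j = 1 then c else d))"

lemma M2_nth [simp]:
  "M2 a b c d $ 1 $ 1 = a" "M2 a b c d $ 1 $ 2 = b" "M2 a b c d $ 2 $ 1 = c" "M2 a b c d $ 2 $ 2 = d"
  by (simp_all add: M2_def)

lemma M2_eta: "X = M2 (X$1$1) (X$1$2) (X$2$1) (X$2$2)"
  by (simp add: vec_eq_iff forall_2)

lemma M2_eq_iff: "M2 a b c d = M2 a' b' c' d' \<longleftrightarrow> a = a' \<and> b = b' \<and> c = c' \<and> d = d'"
  by (auto simp: vec_eq_iff forall_2)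

lemma M2_mult: "M2 a b c d ** M2 e f g h = M2 (a*e+b*g) (a*f+b*h) (c*e+d*g) (c*f+d*h)"
  by (simp add: vec_eq_iff forall_2 matrix_matrix_mult_def sum_2)

lemma M2_one: "mat 1 = M2 1 0 0 1"
  by (simp add: vec_eq_iff forall_2 mat_def)

lemma M2_scaleR: "c *\<^sub>R M2 a b d e = M2 (c *\<^sub>R a) (c *\<^sub>R b) (c *\<^sub>R d) (c *\<^sub>R e)"
  by (simp add: vec_eq_iff forall_2)

lemma M2_add: "M2 a b c d + M2 a' b' c' d' = M2 (a+a') (b+b') (c+c') (d+d')"
  by (simp add: vec_eq_iff forall_2)

lemma M2_mv: "M2 a b c d *v x = (\<chi> i. if i = 1 then a * x$1 + b * x$2 else c * x$1 + d * x$2)"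
  by (simp add: vec_eq_iff forall_2 matrix_vector_mult_def sum_2)

lemma M2_sums:
  fixes f :: "nat \<Rightarrow> 'a::real_normed_vector"
  assumes "f1 sums a" "f2 sums b" "f3 sums c" "f4 sums d"
  shows "(\<lambda>k. M2 (f1 k) (f2 k) (f3 k) (f4 k)) sums M2 a b c d"
  using assms unfolding sums_def
  apply -
  apply (rule vec_tendstoI)
  apply (rule vec_tendstoI)
  subgoal for i j
    using exhaust_2[of i] exhaust_2[of j] by (auto simp: sum_component)
  done


lemma matpow_tri_ne:
  fixes p q r :: complex assumes "p \<noteq> r"
  shows "matpow (M2 p q 0 r) k = M2 (p^k) (q * (p^k - r^k) / (p - r)) 0 (r^k)"
proof (induction k)
  case 0 show ?case by (simp add: M2_one)
next
  case (Suc k)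
  have "p * (q * (p ^ k - r ^ k) / (p - r)) + q * r ^ k = q * (p * p ^ k - r * r ^ k) / (p - r)"
    using assms by (simp add: field_simps)
  then show ?case using Suc by (simp add: M2_mult)
qed

lemma matpow_tri_eq:
  fixes p q :: complex
  shows "matpow (M2 p q 0 p) k = M2 (p^k) (q * of_nat k * p^(k-1)) 0 (p^k)"
proof (induction k)
  case 0 show ?case by (simp add: M2_one)
next
  case (Suc k)
  have "p * (q * of_nat k * p ^ (k - 1)) + q * p ^ k = q * (1 + of_nat k) * p ^ k"
    by (cases k) (simp_all add: algebra_simps)
  then show ?case using Suc by (simp add: M2_mult)
qed

definition Etri :: "complex \<Rightarrow> complex \<Rightarrow> complex \<Rightarrow> complex^2^2" where
  "Etri p q r = M2 (exp p) (if p = r then q * exp p else q * (exp p - exp r) / (p - r)) 0 (exp r)"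

lemma exp_sums': "(\<lambda>k. (1 / fact k) *\<^sub>R ((p::complex) ^ k)) sums exp p"
  using exp_converges[of p] by (simp add: divide_inverse scaleR_conv_of_real)

lemma mexp_tri_sums:
  fixes p q r :: complex
  shows "(\<lambda>k. (1 / fact k) *\<^sub>R matpow (M2 p q 0 r) k) sums Etri p q r"
proof (cases "p = r")
  case True
  have s1: "(\<lambda>k. (1 / fact k) *\<^sub>R (q * of_nat k * p ^ (k - 1))) sums (q * exp p)"
  proof -
    have "(\<lambda>k. q * ((1 / fact k) *\<^sub>R (p ^ k))) sums (q * exp p)"
      by (rule sums_mult[OF exp_sums'])
    moreover have "(\<lambda>k. q * ((1 / fact k) *\<^sub>R (p ^ k))) = (\<lambda>k. (1 / fact (Suc k)) *\<^sub>R (q * of_nat (Suc k) * p ^ (Suc k - 1)))"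
    proof (rule ext)
      fix k
      have "(of_nat (Suc k) :: complex) / fact (Suc k) = 1 / fact k"
        by (simp add: fact_Suc divide_simps del: of_nat_Suc)
      then have "(1 / fact (Suc k)) *\<^sub>R (q * of_nat (Suc k) * p ^ k) = q * ((1 / fact k) *\<^sub>R (p ^ k))"
        by (simp add: scaleR_conv_of_real field_simps del: of_nat_Suc)
      then show "q * ((1 / fact k) *\<^sub>R (p ^ k)) = (1 / fact (Suc k)) *\<^sub>R (q * of_nat (Suc k) * p ^ (Suc k - 1))"
        by simp
    qed
    ultimately show ?thesis
      using sums_Suc_iff[where f = "\<lambda>k. (1 / fact k) *\<^sub>R (q * of_nat k * p ^ (k - 1))"] by simp
  qed
  show ?thesis using True M2_sums[OF exp_sums'[of p] s1 sums_zero exp_sums'[of p]]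
    by (simp add: matpow_tri_eq M2_scaleR Etri_def del: scaleR_scaleR)
next
  case False
  have s1: "(\<lambda>k. (1 / fact k) *\<^sub>R (q * (p ^ k - r ^ k) / (p - r))) sums (q * (exp p - exp r) / (p - r))"
  proof -
    have "(\<lambda>k. q / (p - r) * ((1 / fact k) *\<^sub>R (p ^ k) - (1 / fact k) *\<^sub>R (r ^ k))) sums (q / (p - r) * (exp p - exp r))"
      by (intro sums_mult sums_diff exp_sums')
    then show ?thesis by (simp add: scaleR_conv_of_real field_simps)
  qed
  show ?thesis using False M2_sums[OF exp_sums'[of p] s1 sums_zero exp_sums'[of r]]
    by (simp add: matpow_tri_ne M2_scaleR Etri_def del: scaleR_scaleR)
qed

lemma mexp_tri: "mexp (M2 p q 0 r) = Etri p q r"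
  unfolding mexp_def using mexp_tri_sums sums_unique by metis


lemma norm_vec2: "norm (x :: 'a::real_normed_vector^2) = sqrt ((norm (x$1))^2 + (norm (x$2))^2)"
  by (simp add: norm_vec_def L2_set_def sum_2)

definition Nf :: "real \<Rightarrow> real \<Rightarrow> real \<Rightarrow> real" where
  "Nf P Q R = (sqrt ((P+R)^2 + Q^2) + sqrt ((P-R)^2 + Q^2)) / 2"

lemma Nf_nonneg: "Nf P Q R \<ge> 0" by (simp add: Nf_def)

lemma Nf_facts:
  assumes "P \<ge> 0" "Q \<ge> 0" "R \<ge> 0"
  defines "s \<equiv> Nf P Q R"
  shows "s^2 - P^2 \<ge> 0" "s^2 - Q^2 - R^2 \<ge> 0"
        "(s^2 - P^2) * (s^2 - Q^2 - R^2) = P^2 * Q^2"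
proof -
  define X where "X = sqrt ((P+R)^2 + Q^2)"
  define Y where "Y = sqrt ((P-R)^2 + Q^2)"
  have X2: "X^2 = (P+R)^2 + Q^2" and Y2: "Y^2 = (P-R)^2 + Q^2" by (simp_all add: X_def Y_def)
  have X0: "X \<ge> 0" "Y \<ge> 0" by (simp_all add: X_def Y_def)
  define Z where "Z = X * Y"
  have Z0: "Z \<ge> 0" using X0 by (simp add: Z_def)
  have Z2: "Z^2 = ((P+R)^2 + Q^2) * ((P-R)^2 + Q^2)" by (simp add: Z_def power_mult_distrib X2 Y2)
  have sXY: "s = (X+Y)/2" by (simp add: s_def Nf_def X_def Y_def)
  have s2: "s^2 = (X^2 + Y^2 + 2*Z)/4" unfolding sXY by (simp add: Z_def power2_eq_square field_simps)
  have sa: "s^2 - P^2 = (Z + Q^2 + R^2 - P^2)/2" using s2 X2 Y2 by (simp add: power2_eq_square field_simps)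
  have sc: "s^2 - Q^2 - R^2 = (Z + P^2 - Q^2 - R^2)/2" using s2 X2 Y2 by (simp add: power2_eq_square field_simps)
  have key: "Z^2 - (P^2 - Q^2 - R^2)^2 = 4 * P^2 * Q^2" unfolding Z2 by (simp add: power2_eq_square algebra_simps)
  have "0 \<le> 4 * P^2 * Q^2" by simp
  then have "(P^2 - Q^2 - R^2)^2 \<le> Z^2" using key by linarith
  then have "\<bar>P^2 - Q^2 - R^2\<bar> \<le> Z" using Z0 by (metis abs_le_square_iff abs_of_nonneg)
  then have h1: "P^2 - Q^2 - R^2 \<le> Z" and h2: "-(P^2 - Q^2 - R^2) \<le> Z" by (auto simp: abs_le_iff)
  show "s^2 - P^2 \<ge> 0" unfolding sa using h1 by (simp add: field_simps)
  show "s^2 - Q^2 - R^2 \<ge> 0" unfolding sc using h2 by (simp add: field_simps)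
  show "(s^2 - P^2) * (s^2 - Q^2 - R^2) = P^2 * Q^2"
    unfolding sa sc using key by (simp add: power2_eq_square algebra_simps)
qed

lemma Nf_quad:
  assumes "P \<ge> 0" "Q \<ge> 0" "R \<ge> 0"
  shows "(P*x + Q*y)^2 + R^2*y^2 \<le> (Nf P Q R)^2 * (x^2 + y^2)"
proof -
  define s where "s = Nf P Q R"
  define a where "a = s^2 - P^2"
  define c where "c = s^2 - Q^2 - R^2"
  have a0: "a \<ge> 0" and c0: "c \<ge> 0" and ac: "a * c = P^2 * Q^2"
    using Nf_facts[OF assms] by (simp_all add: a_def c_def s_def)
  have "sqrt a * sqrt c = P * Q"
    by (simp add: real_sqrt_mult[symmetric] ac real_sqrt_mult assms)
  then have "0 \<le> (sqrt a * x - sqrt c * y)^2 " by simp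
  also have "... = a * x^2 - 2 * (P*Q) * x * y + c * y^2"
    using a0 c0 \<open>sqrt a * sqrt c = P * Q\<close>[symmetric]
    by (simp add: power2_eq_square algebra_simps)
  also have "... = s^2 * (x^2+y^2) - ((P*x + Q*y)^2 + R^2*y^2)"
    by (simp add: a_def c_def power2_eq_square algebra_simps)
  finally show ?thesis by (simp add: s_def)
qed

lemma tri_opnorm_le: "opnorm (M2 p q 0 (r::complex)) \<le> Nf (cmod p) (cmod q) (cmod r)"
  unfolding opnorm_def
proof (rule onorm_le)
  fix x :: "complex^2"
  let ?s = "Nf (cmod p) (cmod q) (cmod r)"
  have "(norm (M2 p q 0 r *v x))^2 = (cmod (p * x$1 + q * x$2))^2 + (cmod (r * x$2))^2"
    by (simp add: norm_vec2 M2_mv)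
  also have "... \<le> (cmod p * cmod (x$1) + cmod q * cmod (x$2))^2 + (cmod r)^2 * (cmod (x$2))^2"
    by (intro add_mono power_mono) (auto simp: norm_mult power_mult_distrib intro: order_trans[OF norm_triangle_ineq])
  also have "... \<le> ?s^2 * ((cmod (x$1))^2 + (cmod (x$2))^2)"
    by (rule Nf_quad) auto
  also have "... = (?s * norm x)^2" by (simp add: norm_vec2 power_mult_distrib)
  finally show "norm (M2 p q 0 r *v x) \<le> ?s * norm x"
    using Nf_nonneg by (meson norm_ge_zero power2_le_imp_le mult_nonneg_nonneg)
qed

lemma unit_phase: obtains u :: complex where "cmod u = 1" "p * u = of_real (cmod p)"
proof (cases "p = 0")
  case True then show ?thesis using that[of 1] by simp
next
  case False
  show ?thesis
    apply (rule that[of "cnj p / of_real (cmod p)"])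
    using False by (simp_all add: norm_divide complex_norm_square[symmetric] power2_eq_square)
qed

lemma tri_opnorm_ge:
  assumes "q \<noteq> 0"
  shows "Nf (cmod p) (cmod q) (cmod r) \<le> opnorm (M2 p q 0 (r::complex))"
proof -
  define P Q R where "P = cmod p" "Q = cmod q" "R = cmod r"
  define s where "s = Nf P Q R"
  have pos: "P \<ge> 0" "Q > 0" "R \<ge> 0" using assms by (simp_all add: P_Q_R_def)
  note F = Nf_facts[of P Q R]
  define a c where "a = s^2 - P^2" "c = s^2 - Q^2 - R^2"
  have a0: "a \<ge> 0" and c0: "c \<ge> 0" and ac: "a * c = P^2 * Q^2"
    using F pos by (simp_all add: a_c_def s_def)
  obtain u1 where u1: "cmod u1 = 1" "p * u1 = of_real P" using unit_phase P_Q_R_def by metis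
  obtain u2 where u2: "cmod u2 = 1" "q * u2 = of_real Q" using unit_phase P_Q_R_def by metis
  define x :: "complex^2" where "x = (\<chi> i. if i = 1 then of_real (P*Q) * u1 else of_real a * u2)"
  have x1: "x$1 = of_real (P*Q) * u1" and x2: "x$2 = of_real a * u2" by (simp_all add: x_def)
  have nx: "(norm x)^2 = (P*Q)^2 + a^2"
    using a0 pos by (simp add: norm_vec2 x1 x2 norm_mult u1 u2)
  have e1: "(M2 p q 0 r *v x)$1 = of_real (P * (P*Q) + Q * a)"
    by (simp add: M2_mv x1 x2 algebra_simps u1(2)[symmetric] u2(2)[symmetric])
  have "cmod ((M2 p q 0 r *v x)$1) = P * (P*Q) + Q * a"
    unfolding e1 norm_of_real using pos a0 by simp
  moreover have "cmod ((M2 p q 0 r *v x)$2) = R * a"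
    using a0 by (simp add: M2_mv x2 norm_mult u2 P_Q_R_def)
  ultimately have "(norm (M2 p q 0 r *v x))^2 = (P * (P*Q) + Q * a)^2 + (R*a)^2"
    by (simp add: norm_vec2)
  also have "... = s^2 * ((P*Q)^2 + a^2)"
  proof -
    have "c = s^2 - Q^2 - R^2" "a = s^2 - P^2" by (simp_all add: a_c_def)
    then show ?thesis using ac by algebra
  qed
  finally have eq: "(norm (M2 p q 0 r *v x))^2 = (s * norm x)^2"
    by (simp add: nx power_mult_distrib)
  have "norm x > 0"
  proof -
    have "(P*Q)^2 + a^2 > 0"
    proof (cases "P = 0")
      case True
      then have "a = s^2" by (simp add: a_c_def)
      moreover have "s^2 \<ge> Q^2 + R^2" using c0 by (simp add: a_c_def)
      moreover have "Q^2 > 0" using pos by simp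
      ultimately have "a > 0" using pos by (smt (verit) zero_le_power2)
      then show ?thesis by (simp add: power2_eq_square add_nonneg_pos)
    next
      case False
      then have "P * Q > 0" using pos by simp
      then have "(P*Q)^2 > 0" by (rule zero_less_power)
      then show ?thesis by (smt (verit) zero_le_power2)
    qed
    then show ?thesis using nx by (metis norm_ge_zero norm_zero power_zero_numeral less_eq_real_def zero_less_norm_iff)
  qed
  have "norm (M2 p q 0 r *v x) = s * norm x"
    using eq Nf_nonneg by (metis norm_ge_zero power2_eq_iff_nonneg mult_nonneg_nonneg s_def)
  moreover have "norm (M2 p q 0 r *v x) \<le> opnorm (M2 p q 0 r) * norm x"
    unfolding opnorm_def by (rule onorm) simp
  ultimately show ?thesis using \<open>norm x > 0\<close> by (simp add: s_def P_Q_R_def)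
qed


lemma matrix_add_rdistrib': "((B + C) ** A) = (B ** A) + (C ** A)"
  by (vector matrix_matrix_mult_def sum.distrib[symmetric] field_simps)

definition good :: "'a::{real_normed_field,banach}^2^2 \<Rightarrow> bool" where
  "good A \<longleftrightarrow> (\<exists>Bs. Bs \<noteq> [] \<and> fold (\<lambda>B P. mexp B ** P) Bs (mat 1) = mexp A \<and>
                  (\<Sum>B\<leftarrow>Bs. opnorm B) < opnorm A)"

lemma good_imp: "good A \<Longrightarrow> magnus (mexp A) < ereal (opnorm A)"
proof -
  assume "good A"
  then obtain Bs where h: "Bs \<noteq> []" "fold (\<lambda>B P. mexp B ** P) Bs (mat 1) = mexp A"
      "(\<Sum>B\<leftarrow>Bs. opnorm B) < opnorm A" by (auto simp: good_def)
  have "magnus (mexp A) \<le> ereal (\<Sum>B\<leftarrow>Bs. opnorm B)"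
    unfolding magnus_def by (rule Inf_lower) (use h in blast)
  also have "... < ereal (opnorm A)" using h by simp
  finally show ?thesis .
qed

lemma fold_conj:
  fixes U V :: "'a::{real_normed_field,banach}^2^2"
  assumes "\<forall>B\<in>set Bs. mexp (U ** B ** V) = U ** mexp B ** V" "V ** U = mat 1"
  shows "fold (\<lambda>B P. mexp B ** P) (map (\<lambda>B. U ** B ** V) Bs) (U ** P ** V) =
         U ** fold (\<lambda>B P. mexp B ** P) Bs P ** V"
  using assms(1)
proof (induction Bs arbitrary: P)
  case Nil then show ?case by simp
next
  case (Cons B Bs)
  have "mexp (U ** B ** V) ** (U ** P ** V) = U ** (mexp B ** P) ** V"
    using Cons.prems assms(2) by (simp add: matrix_mul_assoc) (metis matrix_mul_assoc matrix_mul_rid)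
  then show ?case using Cons by simp
qed

lemma matpow_conj:
  fixes U V :: "'a::{real_normed_field,banach}^2^2"
  assumes "V ** U = mat 1" "U ** V = mat 1"
  shows "matpow (U ** B ** V) k = U ** matpow B k ** V"
proof (induction k)
  case 0 then show ?case using assms by (simp add: matrix_mul_rid)
next
  case (Suc k)
  have "U ** B ** V ** (U ** matpow B k ** V) = U ** B ** (V ** U) ** matpow B k ** V"
    by (simp add: matrix_mul_assoc)
  also have "... = U ** (B ** matpow B k) ** V" using assms by (simp add: matrix_mul_rid matrix_mul_assoc)
  finally show ?case using Suc by simp
qed

lemma mexp_conj:
  fixes U V B S :: "complex^2^2"
  assumes "(\<lambda>k. (1 / fact k) *\<^sub>R matpow B k) sums S" "V ** U = mat 1" "U ** V = mat 1"
  shows "(\<lambda>k. (1 / fact k) *\<^sub>R matpow (U ** B ** V) k) sums (U ** S ** V)"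
        "mexp (U ** B ** V) = U ** S ** V"
proof -
  have lin: "linear (\<lambda>M::complex^2^2. U ** M ** V)"
    by (rule linearI) (simp_all add: matrix_add_ldistrib matrix_add_rdistrib' matrix_scalar_ac scalar_matrix_assoc)
  then have bl: "bounded_linear (\<lambda>M::complex^2^2. U ** M ** V)" by (simp add: linear_conv_bounded_linear)
  have "(\<lambda>k. U ** ((1 / fact k) *\<^sub>R matpow B k) ** V) sums (U ** S ** V)"
    by (rule bounded_linear.sums[OF bl assms(1)])
  moreover have "(\<lambda>k. U ** ((1 / fact k) *\<^sub>R matpow B k) ** V) = (\<lambda>k. (1 / fact k) *\<^sub>R matpow (U ** B ** V) k)"
    using assms(2,3) by (simp add: matpow_conj matrix_scalar_ac scalar_matrix_assoc)
  ultimately show s: "(\<lambda>k. (1 / fact k) *\<^sub>R matpow (U ** B ** V) k) sums (U ** S ** V)" by simp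
  then show "mexp (U ** B ** V) = U ** S ** V" unfolding mexp_def by (rule sums_unique[symmetric])
qed

lemma opnorm_conj:
  fixes U V B :: "'a::{real_normed_field,banach,euclidean_space}^2^2"
  assumes "\<And>y. norm (U *v y) = norm y" "\<And>y. norm (V *v y) = norm y" "V ** U = mat 1"
  shows "opnorm (U ** B ** V) = opnorm B"
proof (rule antisym)
  show "opnorm (U ** B ** V) \<le> opnorm B"
    unfolding opnorm_def
  proof (rule onorm_le)
    fix y
    have "norm ((U ** B ** V) *v y) = norm (B *v (V *v y))"
      by (simp add: matrix_vector_mul_assoc[symmetric] assms(1))
    also have "... \<le> onorm ((*v) B) * norm (V *v y)" by (rule onorm) simp
    finally show "norm ((U ** B ** V) *v y) \<le> onorm ((*v) B) * norm y" using assms(2) by simp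
  qed
next
  show "opnorm B \<le> opnorm (U ** B ** V)"
    unfolding opnorm_def
  proof (rule onorm_le)
    fix y
    have "B *v y = B *v ((V ** U) *v y)" using assms(3) by simp
    then have "norm (B *v y) = norm ((U ** B ** V) *v (U *v y))"
      by (simp add: matrix_vector_mul_assoc assms(1) flip: matrix_vector_mul_assoc)
    also have "... \<le> onorm ((*v) (U ** B ** V)) * norm (U *v y)" by (rule onorm) simp
    finally show "norm (B *v y) \<le> onorm ((*v) (U ** B ** V)) * norm y" using assms(1) by simp
  qed
qed


lemma Nf_sym: "Nf P Q R = Nf R Q P"
  by (simp add: Nf_def power2_commute add.commute)

lemma Nf_scale: assumes "c \<ge> 0" shows "Nf (c*P) (c*Q) (c*R) = c * Nf P Q R"
proof -
  have "(c*P + c*R)^2 + (c*Q)^2 = c^2 * ((P+R)^2 + Q^2)" "(c*P - c*R)^2 + (c*Q)^2 = c^2 * ((P-R)^2 + Q^2)"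
    by (simp_all add: power2_eq_square algebra_simps)
  then have e: "sqrt ((c*P + c*R)^2 + (c*Q)^2) = c * sqrt ((P+R)^2 + Q^2)"
               "sqrt ((c*P - c*R)^2 + (c*Q)^2) = c * sqrt ((P-R)^2 + Q^2)"
    using assms by (simp_all add: real_sqrt_mult)
  show ?thesis unfolding Nf_def e by (simp add: algebra_simps add_divide_distrib)
qed

lemma Nf_mono_Q: assumes "Q1^2 < Q2^2" shows "Nf P Q1 R < Nf P Q2 R"
proof -
  have "sqrt ((P+R)^2 + Q1^2) < sqrt ((P+R)^2 + Q2^2)" "sqrt ((P-R)^2 + Q1^2) < sqrt ((P-R)^2 + Q2^2)"
    using assms by simp_all
  then show ?thesis unfolding Nf_def by (intro divide_strict_right_mono add_strict_mono) auto
qed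

lemma sqrt_tangent: assumes "S > 0" "v \<ge> 0" shows "sqrt v \<le> (S^2 + v) / (2*S)"
proof -
  have "0 \<le> (sqrt v - S)^2" by simp
  then have "2 * S * sqrt v \<le> S^2 + v" using assms by (simp add: power2_eq_square algebra_simps)
  then show ?thesis using assms by (simp add: field_simps)
qed

lemma sqrt_pair: assumes "K \<ge> 0" "Q > 0" "x^2 + y^2 < 2 * Q^2"
  shows "sqrt (K + x^2) + sqrt (K + y^2) < 2 * sqrt (K + Q^2)"
proof -
  define S where "S = sqrt (K + Q^2)"
  have S0: "S > 0" using assms by (simp add: S_def add_nonneg_pos)
  have S2: "S^2 = K + Q^2" using assms by (simp add: S_def)
  have "sqrt (K + x^2) + sqrt (K + y^2) \<le> (S^2 + (K + x^2)) / (2*S) + (S^2 + (K + y^2)) / (2*S)"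
    using assms S0 by (intro add_mono sqrt_tangent) auto
  also have "... = ((S^2 + (K + x^2)) + (S^2 + (K + y^2))) / (2*S)" by (simp add: add_divide_distrib)
  also have "... = (4*K + 2*Q^2 + x^2 + y^2) / (2*S)"
  proof -
    have "(S^2 + (K + x^2)) + (S^2 + (K + y^2)) = 4*K + 2*Q^2 + x^2 + y^2" using S2 by (smt (verit))
    then show ?thesis by simp
  qed
  also have "... < (4*K + 4*Q^2) / (2*S)" using assms S0 by (intro divide_strict_right_mono) auto
  also have "... = 2 * S" using S2 S0 by (simp add: field_simps power2_eq_square)
  finally show ?thesis by (simp add: S_def)
qed

lemma Nf_pair: assumes "Q > 0" "x^2 + y^2 < 2 * Q^2"
  shows "Nf P x R + Nf P y R < 2 * Nf P Q R"
  using sqrt_pair[OF _ assms, of "(P+R)^2"] sqrt_pair[OF _ assms, of "(P-R)^2"]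
  unfolding Nf_def by (simp add: field_simps)

lemma cmod_parallelogram: "(cmod (u+v))^2 + (cmod (u-v))^2 = 2 * (cmod u)^2 + 2 * (cmod v)^2"
  unfolding cmod_power2 by (simp add: power2_eq_square algebra_simps)

lemma mexp_tri_ne: "(p::complex) \<noteq> r \<Longrightarrow> mexp (M2 p q 0 r) = M2 (exp p) (q * (exp p - exp r) / (p - r)) 0 (exp r)"
  by (simp add: mexp_tri Etri_def)

lemma exp_half_sq: "exp (a/2) * exp (a/2) = exp (a::complex)"
  by (simp add: exp_add[symmetric])

lemma good_tri_c2:
  fixes a b d :: complex
  assumes "b \<noteq> 0" "a \<noteq> d" "exp (a/2) = exp (d/2)"
  shows "good (M2 a b 0 d)"
proof -
  have ead: "exp a = exp d" using assms(3) exp_half_sq[of a] exp_half_sq[of d] by simp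
  have "fold (\<lambda>B P. mexp B ** P) [M2 a 0 0 d] (mat 1) = mexp (M2 a b 0 d)"
    using assms ead by (simp add: mexp_tri Etri_def)
  moreover have "opnorm (M2 a 0 0 d) < opnorm (M2 a b 0 d)"
  proof -
    have "opnorm (M2 a 0 0 d) \<le> Nf (cmod a) 0 (cmod d)" using tri_opnorm_le[of a 0 d] by simp
    also have "... < Nf (cmod a) (cmod b) (cmod d)" using assms by (intro Nf_mono_Q) simp
    also have "... \<le> opnorm (M2 a b 0 d)" by (rule tri_opnorm_ge[OF assms(1)])
    finally show ?thesis .
  qed
  ultimately show ?thesis unfolding good_def by (intro exI[of _ "[M2 a 0 0 d]"]) simp
qed

lemma good_tri_c1:
  fixes a b d :: complex
  assumes b0: "b \<noteq> 0" and ne: "exp (a/2) \<noteq> exp (d/2)"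
  shows "good (M2 a b 0 d)"
proof -
  have ad: "a \<noteq> d" using ne by auto
  have ad2: "a/2 \<noteq> d/2" using ad by simp
  define ua ud where "ua = exp (a/2)" "ud = exp (d/2)"
  define Q where "Q = b/2"
  define t where "t = 1 / ((cmod ua)^2 + (cmod ud)^2)"
  define D where "D = ud - ua"
  define z where "z = - (of_real t * Q * cnj D)"
  define q1 q2 where "q1 = Q + ud * z" "q2 = Q - ua * z"
  have ua0: "ua \<noteq> 0" "ud \<noteq> 0" by (simp_all add: ua_ud_def)
  have tpos: "t > 0" using ua0 by (simp add: t_def add_pos_pos)
  have D0: "D \<noteq> 0" using ne by (simp add: D_def ua_ud_def)
  have Q0: "Q \<noteq> 0" using b0 by (simp add: Q_def)
  have lin: "ua * q1 + ud * q2 = (ua + ud) * Q" by (simp add: q1_q2_def algebra_simps)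
  have prod: "fold (\<lambda>B P. mexp B ** P) [M2 (a/2) q1 0 (d/2), M2 (a/2) q2 0 (d/2)] (mat 1) = mexp (M2 a b 0 d)"
  proof -
    have e1: "exp a = ua * ua" "exp d = ud * ud" by (simp_all add: ua_ud_def exp_half_sq)
    define f where "f = (ua - ud) / (a/2 - d/2)"
    have ad': "a - d \<noteq> 0" using ad by simp
    have ff: "f = 2 * (ua - ud) / (a - d)" by (simp add: f_def divide_divide_eq_right diff_divide_distrib[symmetric])
    have fq: "\<And>q. q * (ua - ud) / (a/2 - d/2) = q * f" by (simp add: f_def)
    have "ua * (q1 * (ua - ud) / (a/2 - d/2)) + q2 * (ua - ud) / (a/2 - d/2) * ud
          = f * (ua * q1 + ud * q2)" unfolding fq by (simp add: algebra_simps)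
    also have "... = f * ((ua + ud) * Q)" by (simp add: lin)
    also have "... = b * (ua * ua - ud * ud) / (a - d)"
      using ad' unfolding ff Q_def by (simp add: field_simps)
    finally have "ua * (q1 * (ua - ud) / (a/2 - d/2)) + q2 * (ua - ud) / (a/2 - d/2) * ud = b * (exp a - exp d) / (a - d)"
      by (simp add: e1)
    then show ?thesis using ad ad2
      by (simp add: mexp_tri Etri_def M2_mult e1 ua_ud_def[symmetric] M2_eq_iff)
  qed
  have ht: "of_real t * (ud * cnj ud + ua * cnj ua) = 1"
  proof -
    have "ud * cnj ud + ua * cnj ua = of_real ((cmod ua)^2 + (cmod ud)^2)"
      unfolding of_real_add complex_norm_square by (simp add: add.commute)
    moreover have "(cmod ua)^2 + (cmod ud)^2 > 0" using ua0 by (simp add: add_pos_pos)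
    then have "t * ((cmod ua)^2 + (cmod ud)^2) = 1" using ua0 by (simp add: t_def)
    then have "of_real t * of_real ((cmod ua)^2 + (cmod ud)^2) = (1::complex)" by (metis of_real_1 of_real_mult)
    ultimately show ?thesis by (simp only:)
  qed
  have cq: "q1 * cnj q1 + q2 * cnj q2 = 2 * (Q * cnj Q) - of_real t * (Q * cnj Q) * (D * cnj D)"
  proof -
    have "q1 * cnj q1 + q2 * cnj q2 = 2 * (Q * cnj Q) + of_real t * (Q * cnj Q) * (D * cnj D) * (of_real t * (ud * cnj ud + ua * cnj ua)) - 2 * of_real t * (Q * cnj Q) * (D * cnj D)"
      by (simp add: q1_q2_def z_def D_def algebra_simps)
    then show ?thesis using ht by simp
  qed
  have nq: "(cmod q1)^2 + (cmod q2)^2 = 2 * (cmod Q)^2 - t * (cmod Q)^2 * (cmod D)^2"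
  proof -
    have "complex_of_real ((cmod q1)^2 + (cmod q2)^2) = complex_of_real (2 * (cmod Q)^2 - t * (cmod Q)^2 * (cmod D)^2)"
      by (simp only: of_real_add of_real_diff of_real_mult complex_norm_square cq) simp
    then show ?thesis by (simp only: of_real_eq_iff)
  qed
  have "t * (cmod Q)^2 * (cmod D)^2 > 0" using tpos Q0 D0 by simp
  then have lt: "(cmod q1)^2 + (cmod q2)^2 < 2 * (cmod Q)^2" using nq by linarith
  have "opnorm (M2 (a/2) q1 0 (d/2)) + opnorm (M2 (a/2) q2 0 (d/2))
        \<le> Nf (cmod (a/2)) (cmod q1) (cmod (d/2)) + Nf (cmod (a/2)) (cmod q2) (cmod (d/2))"
    by (intro add_mono tri_opnorm_le)
  also have "... < 2 * Nf (cmod (a/2)) (cmod Q) (cmod (d/2))"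
    using Q0 lt by (intro Nf_pair) auto
  also have "... = Nf (cmod a) (cmod b) (cmod d)"
    using Nf_scale[of 2 "cmod (a/2)" "cmod Q" "cmod (d/2)"] by (simp add: Q_def norm_divide)
  also have "... \<le> opnorm (M2 a b 0 d)" by (rule tri_opnorm_ge[OF b0])
  finally have cost: "opnorm (M2 (a/2) q1 0 (d/2)) + opnorm (M2 (a/2) q2 0 (d/2)) < opnorm (M2 a b 0 d)" .
  show ?thesis unfolding good_def
    by (rule exI[of _ "[M2 (a/2) q1 0 (d/2), M2 (a/2) q2 0 (d/2)]"]) (use prod cost in simp)
qed

lemma c3_real_bound:
  fixes y B :: real
  assumes y: "0 < y" "y \<le> 1" and B: "18 * y \<le> B^2"
  shows "y^2 + B^2 / (2+y)^2 < B^2 / 4"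
proof -
  have y2: "y^2 \<le> 1" using y by (simp add: power_le_one)
  have "(9 - 4*y) * (2+y)^2 - 36 = y * (20 - 7*y - 4*y^2)" by (simp add: power2_eq_square algebra_simps)
  moreover have "20 - 7*y - 4*y^2 \<ge> 0" using y y2 by linarith
  ultimately have "(9 - 4*y) * (2+y)^2 - 36 \<ge> 0" using y by simp
  then have i1: "36 \<le> (9 - 4*y) * (2+y)^2" by simp
  have p: "(2+y)^2 > 0" using y by simp
  have "1 / (2+y)^2 \<le> (9 - 4*y) / 36" using i1 p by (simp add: divide_simps)
  then have "B^2 * (1 / (2+y)^2) \<le> B^2 * ((9 - 4*y) / 36)" by (rule mult_left_mono) simp
  then have i2: "B^2 / (2+y)^2 \<le> B^2 / 4 - B^2 * y / 9" by (simp add: field_simps)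
  have "B^2 * y / 9 \<ge> 2 * y^2" using B y by (simp add: power2_eq_square field_simps mult_right_mono)
  moreover have "y^2 > 0" using y by simp
  ultimately show ?thesis using i2 by linarith
qed

lemma good_tri_c3:
  fixes a b :: complex
  assumes b0: "b \<noteq> 0"
  shows "good (M2 a b 0 a)"
proof -
  define B where "B = cmod b"
  have B0: "B > 0" using b0 by (simp add: B_def)
  define y where "y = min 1 (B^2 / 18)"
  have y: "0 < y" "y \<le> 1" "18 * y \<le> B^2" using B0 by (auto simp: y_def)
  define x where "x = y / 2"
  have x0: "x > 0" using y by (simp add: x_def)
  define e where "e = exp x"
  have e0: "e > 0" by (simp add: e_def)
  have ee: "e * e = exp y" by (simp add: e_def x_def exp_add[symmetric])
  have ey: "exp y - 1 \<ge> y + y^2/2" using exp_lower_Taylor_quadratic[of y] y by simp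
  have "y^2/2 \<ge> 0" by simp
  then have "exp y - 1 > 0" using ey y by linarith
  then have ee1: "e * e - 1 > 0" using ee by simp
  define k where "k = x / (e * e - 1)"
  have k0: "k > 0" using x0 ee1 by (simp add: k_def)
  have kk: "k * (e * e - 1) = x" using ee1 by (simp add: k_def)
  have kle: "k \<le> 1 / (2 + y)"
  proof -
    have "k = (y/2) / (exp y - 1)" by (simp add: k_def x_def ee)
    also have "... \<le> (y/2) / (y + y^2/2)"
      using ey y by (intro divide_left_mono) (auto simp: add_pos_nonneg)
    also have "... = 1 / (2 + y)"
    proof -
      have "y * y > 0" using y by simp
      then have "y * y + y * 2 \<noteq> 0" using y by linarith
      then show ?thesis using y by (simp add: power2_eq_square field_simps)
    qed
    finally show ?thesis .
  qed
  define xc where "xc = complex_of_real x"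
  have xc0: "xc \<noteq> 0" using x0 by (simp add: xc_def)
  define q where "q = b * of_real k"
  define E where "E = exp (a/2)"
  have E1: "exp (a/2 + xc) = E * of_real e" by (simp add: E_def exp_add xc_def e_def exp_of_real)
  have E2: "exp (a/2 - xc) = E * of_real (exp (-x))"
  proof -
    have "a/2 - xc = a/2 + complex_of_real (-x)" by (simp add: xc_def)
    then show ?thesis by (simp only: exp_add exp_of_real E_def)
  qed
  have eme: "exp (-x) * e = 1" by (simp add: e_def exp_minus)
  have prod: "fold (\<lambda>B P. mexp B ** P) [M2 (a/2 - xc) q 0 (a/2 + xc), M2 (a/2 + xc) q 0 (a/2 - xc)] (mat 1)
              = mexp (M2 a b 0 a)"
  proof -
    have ne: "a/2 + xc \<noteq> a/2 - xc" "a/2 - xc \<noteq> a/2 + xc" using xc0 by auto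
    have d1: "(a/2 + xc) - (a/2 - xc) = 2 * xc" "(a/2 - xc) - (a/2 + xc) = - (2 * xc)" by simp_all
    define F1 F2 where "F1 = exp (a/2 + xc)" "F2 = exp (a/2 - xc)"
    have F12: "F1 * F2 = exp a" by (simp add: F1_F2_def exp_add[symmetric])
    have F21: "F2 * F1 = exp a" using F12 by (simp add: mult.commute)
    define \<beta> where "\<beta> = q * (F1 - F2) / (2 * xc)"
    have \<beta>i: "\<beta> = q * (F1 - F2) * inverse (2 * xc)" by (simp only: \<beta>_def divide_inverse)
    have m1: "mexp (M2 (a/2 + xc) q 0 (a/2 - xc)) = M2 F1 \<beta> 0 F2"
      unfolding mexp_tri_ne[OF ne(1)] by (simp only: F1_F2_def[symmetric] d1 \<beta>_def)
    have neg: "q * (F2 - F1) / (- (2 * xc)) = \<beta>"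
      unfolding \<beta>i divide_inverse inverse_minus_eq by (simp add: algebra_simps)
    have m2: "mexp (M2 (a/2 - xc) q 0 (a/2 + xc)) = M2 F2 \<beta> 0 F1"
      unfolding mexp_tri_ne[OF ne(2)] by (simp only: F1_F2_def[symmetric] d1 neg)
    have ix: "inverse (2 * xc) = inverse xc / 2" by (simp add: inverse_mult_distrib)
    have "F1 * \<beta> + \<beta> * F1 = q * (F1 * (F1 - F2)) * inverse xc"
      by (simp add: \<beta>i ix algebra_simps)
    also have "F1 * (F1 - F2) = E * E * (of_real (e * e) - 1)"
    proof -
      have "of_real e * of_real (exp (-x)) = (1::complex)" using eme by (metis of_real_1 of_real_mult mult.commute)
      then show ?thesis unfolding F1_F2_def E1 E2 by (simp add: algebra_simps)
    qed
    also have "q * (E * E * (of_real (e * e) - 1)) * inverse xc = b * (E * E) * (of_real (k * (e * e - 1)) * inverse xc)"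
      by (simp add: q_def algebra_simps)
    also have "... = b * exp a" using xc0 by (simp add: kk xc_def E_def exp_half_sq)
    finally have h12: "F1 * \<beta> + \<beta> * F1 = b * exp a" .
    have "fold (\<lambda>B P. mexp B ** P) [M2 (a/2 - xc) q 0 (a/2 + xc), M2 (a/2 + xc) q 0 (a/2 - xc)] (mat 1)
          = M2 F1 \<beta> 0 F2 ** M2 F2 \<beta> 0 F1" by (simp add: m1 m2)
    also have "... = M2 (exp a) (b * exp a) 0 (exp a)" by (simp add: M2_mult F12 F21 h12)
    also have "... = mexp (M2 a b 0 a)" by (simp add: mexp_tri Etri_def)
    finally show ?thesis .
  qed
  define P1 R1 where "P1 = cmod (a/2 + xc)" "R1 = cmod (a/2 - xc)"
  have P1R1: "P1 \<ge> 0" "R1 \<ge> 0" by (simp_all add: P1_R1_def)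
  have h1: "(P1 + R1)^2 \<le> (cmod a)^2 + 4 * x^2"
  proof -
    have "P1^2 + R1^2 = 2 * (cmod (a/2))^2 + 2 * (cmod xc)^2"
      unfolding P1_R1_def by (rule cmod_parallelogram)
    also have "... = (cmod a)^2 / 2 + 2 * x^2" using x0 by (simp add: xc_def norm_divide power_divide)
    finally have "P1^2 + R1^2 = (cmod a)^2 / 2 + 2 * x^2" .
    moreover have "(P1 + R1)^2 \<le> 2 * (P1^2 + R1^2)"
      using zero_le_power2[of "P1 - R1"] by (simp add: power2_eq_square algebra_simps)
    ultimately show ?thesis by simp
  qed
  have h2: "(P1 - R1)^2 \<le> 4 * x^2"
  proof -
    have "\<bar>P1 - R1\<bar> \<le> cmod ((a/2 + xc) - (a/2 - xc))" unfolding P1_R1_def by (rule norm_triangle_ineq3)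
    also have "... = 2 * x" using x0 by (simp add: xc_def)
    finally have "\<bar>P1 - R1\<bar> \<le> 2 * x" .
    then have "(P1 - R1)^2 \<le> (2*x)^2" by (metis abs_ge_zero power2_abs power_mono)
    then show ?thesis by (simp add: power2_eq_square)
  qed
  have nq: "cmod q = B * k" using k0 by (simp add: q_def B_def norm_mult)
  have hq: "4 * x^2 + (cmod q)^2 < B^2 / 4"
  proof -
    have "cmod q \<le> B / (2 + y)" using nq kle B0 by (simp add: mult_left_mono divide_inverse)
    then have "(cmod q)^2 \<le> (B / (2+y))^2" using nq B0 k0 by (intro power_mono) auto
    then have "(cmod q)^2 \<le> B^2 / (2+y)^2" by (simp add: power_divide)
    moreover have "4 * x^2 = y^2" by (simp add: x_def power2_eq_square)
    ultimately show ?thesis using c3_real_bound[OF y] by linarith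
  qed
  have s1: "sqrt ((P1+R1)^2 + (cmod q)^2) < sqrt ((cmod a)^2 + B^2/4)" using h1 hq by simp
  have s2: "sqrt ((P1-R1)^2 + (cmod q)^2) < B / 2"
  proof -
    have "sqrt ((P1-R1)^2 + (cmod q)^2) < sqrt ((B/2)^2)" using h2 hq by (simp add: power_divide)
    then show ?thesis using B0 by simp
  qed
  have tgt: "Nf (cmod a) B (cmod a) = sqrt ((cmod a)^2 + B^2/4) + B / 2"
  proof -
    have "sqrt ((cmod a + cmod a)^2 + B^2) = 2 * sqrt ((cmod a)^2 + B^2/4)"
    proof -
      have eq: "(cmod a + cmod a)^2 + B^2 = 2^2 * ((cmod a)^2 + B^2/4)" by (simp add: power2_eq_square field_simps)
      show ?thesis unfolding eq real_sqrt_mult by simp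
    qed
    then show ?thesis using B0 by (simp add: Nf_def)
  qed
  have "opnorm (M2 (a/2 - xc) q 0 (a/2 + xc)) + opnorm (M2 (a/2 + xc) q 0 (a/2 - xc))
        \<le> Nf R1 (cmod q) P1 + Nf P1 (cmod q) R1"
    unfolding P1_R1_def by (intro add_mono tri_opnorm_le)
  also have "... = sqrt ((P1+R1)^2 + (cmod q)^2) + sqrt ((P1-R1)^2 + (cmod q)^2)"
    by (simp add: Nf_sym[of R1] Nf_def field_simps power2_commute[of R1 P1])
  also have "... < Nf (cmod a) B (cmod a)" unfolding tgt by (rule add_strict_mono[OF s1 s2])
  also have "... \<le> opnorm (M2 a b 0 a)" using tri_opnorm_ge[OF b0, of a a] by (simp add: B_def)
  finally have cost: "opnorm (M2 (a/2 - xc) q 0 (a/2 + xc)) + opnorm (M2 (a/2 + xc) q 0 (a/2 - xc)) < opnorm (M2 a b 0 a)" .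
  show ?thesis unfolding good_def
    by (rule exI[of _ "[M2 (a/2 - xc) q 0 (a/2 + xc), M2 (a/2 + xc) q 0 (a/2 - xc)]"]) (use prod cost in simp)
qed

lemma good_tri:
  fixes a b d :: complex
  assumes "b \<noteq> 0"
  shows "good (M2 a b 0 d)"
proof (cases "a = d")
  case True then show ?thesis using good_tri_c3[OF assms] by simp
next
  case False
  then show ?thesis using good_tri_c1[OF assms] good_tri_c2[OF assms False] by blast
qed


lemma sin_lt_self: assumes "(x::real) > 0" shows "sin x < x"
proof (cases "x \<le> 1")
  case False then show ?thesis using sin_le_one[of x] by linarith
next
  case True
  have "(\<lambda>t. t - sin t) 0 < (\<lambda>t. t - sin t) x"
  proof (rule DERIV_pos_imp_increasing_open[OF assms])
    fix t :: real assume t: "0 < t" "t < x"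
    have "DERIV (\<lambda>t. t - sin t) t :> 1 - cos t" by (auto intro!: derivative_eq_intros)
    moreover have "cos t < cos 0" using t True pi_ge_two by (intro cos_monotone_0_pi) auto
    ultimately show "\<exists>y. DERIV (\<lambda>t. t - sin t) t :> y \<and> 0 < y" by auto
  next
    show "continuous_on {0..x} (\<lambda>t. t - sin t)" by (intro continuous_intros)
  qed
  then show ?thesis by simp
qed

lemma self_lt_sinh: assumes "(x::real) > 0" shows "x < sinh x"
proof -
  have "(\<lambda>t. sinh t - t) 0 < (\<lambda>t. sinh t - t) x"
  proof (rule DERIV_pos_imp_increasing_open[OF assms])
    fix t :: real assume t: "0 < t" "t < x"
    have "DERIV (\<lambda>t. sinh t - t) t :> cosh t - 1" by (auto intro!: derivative_eq_intros)
    moreover have "cosh t > 1" using t cosh_real_ge_1[of t] cosh_real_one_iff[of t] by linarith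
    ultimately show "\<exists>y. DERIV (\<lambda>t. sinh t - t) t :> y \<and> 0 < y" by auto
  next
    show "continuous_on {0..x} (\<lambda>t. sinh t - t)" by (intro continuous_intros)
  qed
  then show ?thesis by simp
qed

lemma sinh_lt_x_cosh: assumes "(x::real) > 0" shows "sinh x < x * cosh x"
proof -
  have "(\<lambda>t. t * cosh t - sinh t) 0 < (\<lambda>t. t * cosh t - sinh t) x"
  proof (rule DERIV_pos_imp_increasing_open[OF assms])
    fix t :: real assume t: "0 < t" "t < x"
    have "DERIV (\<lambda>t. t * cosh t - sinh t) t :> (1 * cosh t + t * sinh t) - cosh t"
      by (auto intro!: derivative_eq_intros)
    moreover have "t * sinh t > 0" using t by simp
    ultimately show "\<exists>y. DERIV (\<lambda>t. t * cosh t - sinh t) t :> y \<and> 0 < y" by (intro exI[of _ "(1 * cosh t + t * sinh t) - cosh t"]) auto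
  next
    show "continuous_on {0..x} (\<lambda>t. t * cosh t - sinh t)" by (intro continuous_intros)
  qed
  then show ?thesis by simp
qed

lemma arctan_lt_self: assumes "(x::real) > 0" shows "arctan x < x"
proof -
  have "(\<lambda>t. t - arctan t) 0 < (\<lambda>t. t - arctan t) x"
  proof (rule DERIV_pos_imp_increasing_open[OF assms])
    fix t :: real assume t: "0 < t" "t < x"
    have "DERIV (\<lambda>t. t - arctan t) t :> 1 - inverse (1 + t^2)" by (auto intro!: derivative_eq_intros)
    moreover have "inverse (1 + t^2) < 1" using t by (simp add: inverse_less_1_iff)
    ultimately show "\<exists>y. DERIV (\<lambda>t. t - arctan t) t :> y \<and> 0 < y" by (intro exI[of _ "1 - inverse (1 + t^2)"]) auto
  next
    show "continuous_on {0..x} (\<lambda>t. t - arctan t)" by (intro continuous_intros)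
  qed
  then show ?thesis by simp
qed

lemma abs_arctan_lt: assumes "(x::real) \<noteq> 0" shows "\<bar>arctan x\<bar> < \<bar>x\<bar>"
proof (cases "x > 0")
  case True then show ?thesis using arctan_lt_self[of x] by simp
next
  case False
  then have "-x > 0" using assms by simp
  then show ?thesis using arctan_lt_self[of "-x"] False by (simp add: arctan_minus)
qed

lemma abs_arctan_le: "\<bar>arctan (x::real)\<bar> \<le> \<bar>x\<bar>"
  using abs_arctan_lt[of x] by (cases "x = 0") auto

lemma sinhx_over_x_mono:
  assumes "0 < (a::real)" "a < b" shows "sinh a / a < sinh b / b"
proof (rule DERIV_pos_imp_increasing[OF assms(2)])
  fix x assume x: "a \<le> x" "x \<le> b"
  then have x0: "x > 0" using assms by simp
  have "DERIV (\<lambda>t. sinh t / t) x :> (cosh x * x - sinh x * 1) / x^2"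
    using x0 by (auto intro!: derivative_eq_intros simp: power2_eq_square)
  moreover have "(cosh x * x - sinh x * 1) / x^2 > 0"
    using sinh_lt_x_cosh[OF x0] x0 by (simp add: algebra_simps)
  ultimately show "\<exists>y. DERIV (\<lambda>t. sinh t / t) x :> y \<and> 0 < y" by blast
qed

lemma xcot_decr:
  assumes "0 < (m::real)" "m < W" "W < pi"
  shows "W * cos W * sin m < m * cos m * sin W"
proof -
  have "(\<lambda>t. t * cos t / sin t) W < (\<lambda>t. t * cos t / sin t) m"
  proof (rule DERIV_neg_imp_decreasing[OF assms(2)])
    fix x assume x: "m \<le> x" "x \<le> W"
    then have x0: "0 < x" "x < pi" using assms by auto
    have sx: "sin x > 0" using x0 by (simp add: sin_gt_zero)
    have "DERIV (\<lambda>t. t * cos t / sin t) x :> ((1 * cos x + (- sin x) * x) * sin x - x * cos x * cos x) / (sin x * sin x)"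
      using sx by (auto intro!: derivative_eq_intros simp: power2_eq_square)
    moreover have "((1 * cos x + (- sin x) * x) * sin x - x * cos x * cos x) = sin x * cos x - x"
      using sin_cos_squared_add[of x] by algebra
    moreover have "sin x * cos x < x"
    proof -
      have "sin (2*x) < 2*x" using x0 by (intro sin_lt_self) simp
      then show ?thesis by (simp add: sin_double)
    qed
    ultimately show "\<exists>y. DERIV (\<lambda>t. t * cos t / sin t) x :> y \<and> y < 0"
      using sx by (intro exI[of _ "(sin x * cos x - x) / (sin x * sin x)"]) (auto simp: divide_neg_pos)
  qed
  moreover have "sin m > 0" "sin W > 0" using assms by (auto intro: sin_gt_zero)
  ultimately show ?thesis by (simp add: field_simps)
qed


definition W2 :: "complex \<Rightarrow> complex \<Rightarrow> complex^2^2" where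
  "W2 a b = M2 a (- cnj b) b (cnj a)"

lemma ctranspose_M2: "ctranspose (M2 a b c d) = M2 (cnj a) (cnj c) (cnj b) (cnj d)"
  by (simp add: ctranspose_def vec_eq_iff forall_2)

lemma ctranspose_mult: "ctranspose (X ** Y) = ctranspose Y ** ctranspose (X :: complex^2^2)"
  by (simp add: ctranspose_def matrix_matrix_mult_def vec_eq_iff mult.commute)

lemma ctranspose_W2: "ctranspose (W2 a b) = W2 (cnj a) (- b)"
  by (simp add: W2_def ctranspose_M2)

lemma ctranspose_ctranspose: "ctranspose (ctranspose X) = (X :: complex^2^2)"
  by (simp add: ctranspose_def vec_eq_iff)

lemma W2_inv:
  assumes "a * cnj a + b * cnj b = 1"
  shows "W2 (cnj a) (- b) ** W2 a b = mat 1" "W2 a b ** W2 (cnj a) (- b) = mat 1"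
  using assms by (simp_all add: W2_def M2_mult M2_one M2_eq_iff algebra_simps)

lemma W2_iso:
  assumes "a * cnj a + b * cnj b = 1"
  shows "norm (W2 a b *v y) = norm y"
proof -
  have "complex_of_real ((cmod (a * y$1 - cnj b * y$2))^2 + (cmod (b * y$1 + cnj a * y$2))^2)
        = (a * cnj a + b * cnj b) * complex_of_real ((cmod (y$1))^2 + (cmod (y$2))^2)"
    unfolding of_real_add complex_norm_square by (simp add: algebra_simps)
  then have "(cmod (a * y$1 - cnj b * y$2))^2 + (cmod (b * y$1 + cnj a * y$2))^2 = (cmod (y$1))^2 + (cmod (y$2))^2"
    using assms by (simp only: mult_1 of_real_eq_iff)
  then show ?thesis by (simp add: norm_vec2 W2_def M2_mv)
qed

lemma W2_iso': "a * cnj a + b * cnj b = 1 \<Longrightarrow> norm (W2 (cnj a) (- b) *v y) = norm y"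
  by (rule W2_iso) (simp add: mult.commute)

lemma eigen_exists:
  fixes p q r s :: complex
  obtains a b l where "a * cnj a + b * cnj b = 1" "p * a + q * b = l * a" "r * a + s * b = l * b"
proof -
  obtain v1 v2 l where v: "p * v1 + q * v2 = l * v1" "r * v1 + s * v2 = l * v2" "v1 \<noteq> 0 \<or> v2 \<noteq> 0"
  proof (cases "q = 0")
    case True then show ?thesis using that[of 0 1 s] by simp
  next
    case False
    define c where "c = csqrt ((p + s)^2 - 4 * (p * s - q * r))"
    have c2: "c^2 = (p + s)^2 - 4 * (p * s - q * r)" by (simp add: c_def)
    define l where "l = (p + s + c) / 2"
    have "l^2 - (p + s) * l + (p * s - q * r) = (c^2 - ((p + s)^2 - 4 * (p * s - q * r))) / 4"
      by (simp add: l_def power2_eq_square field_simps)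
    then have char: "l^2 - (p + s) * l + (p * s - q * r) = 0" using c2 by simp
    show ?thesis
    proof (rule that[of q "l - p" l])
      show "p * q + q * (l - p) = l * q" by (simp add: algebra_simps)
      show "r * q + s * (l - p) = l * (l - p)" using char by (simp add: power2_eq_square algebra_simps)
      show "q \<noteq> 0 \<or> l - p \<noteq> 0" using False by simp
    qed
  qed
  define n where "n = sqrt ((cmod v1)^2 + (cmod v2)^2)"
  have n0: "n > 0" using v(3) by (auto simp: n_def add_pos_nonneg add_nonneg_pos)
  have nn: "complex_of_real n * complex_of_real n = v1 * cnj v1 + v2 * cnj v2"
  proof -
    have "n * n = (cmod v1)^2 + (cmod v2)^2" using n0 by (simp add: n_def)
    then have "complex_of_real (n * n) = complex_of_real ((cmod v1)^2 + (cmod v2)^2)" by simp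
    then show ?thesis unfolding of_real_mult of_real_add complex_norm_square .
  qed
  show ?thesis
  proof (rule that[of "v1 / of_real n" "v2 / of_real n" l])
    show "v1 / of_real n * cnj (v1 / of_real n) + v2 / of_real n * cnj (v2 / of_real n) = 1"
    proof -
      have "complex_of_real n * complex_of_real n \<noteq> 0" using n0 by simp
      then have Sne: "v1 * cnj v1 + v2 * cnj v2 \<noteq> 0" using nn by simp
      have "v1 / of_real n * cnj (v1 / of_real n) + v2 / of_real n * cnj (v2 / of_real n)
            = (v1 * cnj v1 + v2 * cnj v2) / (complex_of_real n * complex_of_real n)"
        by (simp add: times_divide_times_eq add_divide_distrib)
      also have "... = 1" unfolding nn[symmetric] using n0 by simp
      finally show ?thesis .
    qed
    show "p * (v1 / of_real n) + q * (v2 / of_real n) = l * (v1 / of_real n)"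
      using v(1) n0 by (simp add: field_simps)
    show "r * (v1 / of_real n) + s * (v2 / of_real n) = l * (v2 / of_real n)"
      using v(2) n0 by (simp add: field_simps)
  qed
qed

lemma schur2:
  fixes A :: "complex^2^2"
  obtains a b where "a * cnj a + b * cnj b = 1" "(W2 (cnj a) (- b) ** A ** W2 a b) $ 2 $ 1 = 0"
proof -
  obtain a b l where h: "a * cnj a + b * cnj b = 1" "A$1$1 * a + A$1$2 * b = l * a" "A$2$1 * a + A$2$2 * b = l * b"
    using eigen_exists by metis
  have "(W2 (cnj a) (- b) ** A ** W2 a b) $ 2 $ 1 = a * (A$2$1 * a + A$2$2 * b) - b * (A$1$1 * a + A$1$2 * b)"
    by (subst M2_eta[of A]) (simp add: W2_def M2_mult algebra_simps)
  also have "... = 0" using h by (simp add: algebra_simps)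
  finally show ?thesis using that h(1) by blast
qed

lemma mexp_sums_all:
  fixes B :: "complex^2^2"
  shows "(\<lambda>k. (1 / fact k) *\<^sub>R matpow B k) sums mexp B"
proof -
  obtain a b where h: "a * cnj a + b * cnj b = 1" "(W2 (cnj a) (- b) ** B ** W2 a b) $ 2 $ 1 = 0"
    using schur2 by metis
  define T where "T = W2 (cnj a) (- b) ** B ** W2 a b"
  have T: "T = M2 (T$1$1) (T$1$2) 0 (T$2$2)" using h(2) by (subst M2_eta) (simp add: T_def)
  have BT: "B = W2 a b ** T ** W2 (cnj a) (- b)"
  proof -
    have "W2 a b ** T ** W2 (cnj a) (- b) = (W2 a b ** W2 (cnj a) (- b)) ** B ** (W2 a b ** W2 (cnj a) (- b))"
      by (simp add: T_def matrix_mul_assoc)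
    then show ?thesis using W2_inv(2)[OF h(1)] by simp
  qed
  have "(\<lambda>k. (1 / fact k) *\<^sub>R matpow T k) sums Etri (T$1$1) (T$1$2) (T$2$2)"
    by (subst T) (rule mexp_tri_sums)
  from mexp_conj[OF this W2_inv(1)[OF h(1)] W2_inv(2)[OF h(1)]]
  show ?thesis using BT by metis
qed

lemma mexp_conj_all:
  fixes U V B :: "complex^2^2"
  assumes "V ** U = mat 1" "U ** V = mat 1"
  shows "mexp (U ** B ** V) = U ** mexp B ** V"
  using mexp_conj(2)[OF mexp_sums_all assms] .

theorem complex_part:
  fixes A :: "complex^2^2"
  assumes "\<not> normal_complex A"
  shows "magnus (mexp A) < ereal (opnorm A)"
proof -
  obtain a b where h: "a * cnj a + b * cnj b = 1" "(W2 (cnj a) (- b) ** A ** W2 a b) $ 2 $ 1 = 0"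
    using schur2 by metis
  define U V where "U = W2 a b" "V = W2 (cnj a) (- b)"
  have VU: "V ** U = mat 1" and UV: "U ** V = mat 1" using W2_inv[OF h(1)] by (simp_all add: U_V_def)
  have isoU: "\<And>y. norm (U *v y) = norm y" using W2_iso[OF h(1)] by (simp add: U_V_def)
  have isoV: "\<And>y. norm (V *v y) = norm y" using W2_iso'[OF h(1)] by (simp add: U_V_def)
  define T where "T = V ** A ** U"
  have T: "T = M2 (T$1$1) (T$1$2) 0 (T$2$2)" using h(2) by (subst M2_eta) (simp add: T_def U_V_def)
  have AT: "A = U ** T ** V"
  proof -
    have "U ** T ** V = (U ** V) ** A ** (U ** V)" by (simp add: T_def matrix_mul_assoc)
    then show ?thesis using UV by simp
  qed
  have t12: "T$1$2 \<noteq> 0"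
  proof
    assume z: "T$1$2 = 0"
    have cU: "ctranspose U = V" "ctranspose V = U"
      by (simp_all add: U_V_def ctranspose_W2)
    have cA: "ctranspose A = U ** ctranspose T ** V"
      unfolding AT by (simp add: ctranspose_mult cU matrix_mul_assoc)
    have TT: "T ** ctranspose T = ctranspose T ** T"
      using z by (subst (1 2 3 4) T) (simp add: ctranspose_M2 M2_mult mult.commute)
    have e1: "A ** ctranspose A = U ** (T ** ctranspose T) ** V"
    proof -
      have "A ** ctranspose A = (U ** T ** V) ** (U ** ctranspose T ** V)" unfolding cA using AT by simp
      also have "... = U ** T ** (V ** U) ** ctranspose T ** V" by (simp add: matrix_mul_assoc)
      also have "... = U ** (T ** ctranspose T) ** V" using VU by (simp add: matrix_mul_assoc)
      finally show ?thesis .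
    qed
    have e2: "ctranspose A ** A = U ** (ctranspose T ** T) ** V"
    proof -
      have "ctranspose A ** A = (U ** ctranspose T ** V) ** (U ** T ** V)" unfolding cA using AT by simp
      also have "... = U ** ctranspose T ** (V ** U) ** T ** V" by (simp add: matrix_mul_assoc)
      also have "... = U ** (ctranspose T ** T) ** V" using VU by (simp add: matrix_mul_assoc)
      finally show ?thesis .
    qed
    have "A ** ctranspose A = ctranspose A ** A" unfolding e1 e2 TT ..
    then show False using assms by (simp add: normal_complex_def)
  qed
  have gT: "good T" using good_tri[OF t12] T by metis
  then obtain Bs where Bs: "Bs \<noteq> []" "fold (\<lambda>B P. mexp B ** P) Bs (mat 1) = mexp T"
      "(\<Sum>B\<leftarrow>Bs. opnorm B) < opnorm T" by (auto simp: good_def)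
  have "good A"
    unfolding good_def
  proof (intro exI conjI)
    show "map (\<lambda>B. U ** B ** V) Bs \<noteq> []" using Bs(1) by simp
    have "fold (\<lambda>B P. mexp B ** P) (map (\<lambda>B. U ** B ** V) Bs) (U ** mat 1 ** V) = U ** mexp T ** V"
      using fold_conj[of Bs U V "mat 1"] mexp_conj_all[OF VU UV] VU Bs(2) by simp
    then show "fold (\<lambda>B P. mexp B ** P) (map (\<lambda>B. U ** B ** V) Bs) (mat 1) = mexp A"
      using UV mexp_conj_all[OF VU UV, of T] AT by simp
    have "(\<Sum>B\<leftarrow>map (\<lambda>B. U ** B ** V) Bs. opnorm B) = (\<Sum>B\<leftarrow>Bs. opnorm B)"
      by (simp add: o_def opnorm_conj[OF isoU isoV VU])
    also have "... < opnorm T" by (rule Bs(3))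
    also have "... = opnorm A" unfolding AT by (simp add: opnorm_conj[OF isoU isoV VU])
    finally show "(\<Sum>B\<leftarrow>map (\<lambda>B. U ** B ** V) Bs. opnorm B) < opnorm A" .
  qed
  then show ?thesis by (rule good_imp)
qed


definition RM :: "complex \<Rightarrow> complex \<Rightarrow> real^2^2" where
  "RM z w = M2 (Re z + Re w) (Im w - Im z) (Im z + Im w) (Re z - Re w)"

lemma RM_eq_iff [simp]: "RM z w = RM z' w' \<longleftrightarrow> z = z' \<and> w = w'"
  by (auto simp: RM_def M2_eq_iff complex_eq_iff)

lemma RM_mult: "RM z1 w1 ** RM z2 w2 = RM (z1*z2 + w1*cnj w2) (z1*w2 + w1*cnj z2)"
  by (simp add: RM_def M2_mult M2_eq_iff algebra_simps)

lemma RM_one: "mat 1 = RM 1 0"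
  by (simp add: RM_def M2_one)

lemma RM_eta: "A = RM (Complex ((A$1$1 + A$2$2)/2) ((A$2$1 - A$1$2)/2)) (Complex ((A$1$1 - A$2$2)/2) ((A$2$1 + A$1$2)/2))"
  by (subst M2_eta) (simp add: RM_def M2_eq_iff field_simps)

lemma transpose_RM: "transpose (RM z w) = RM (cnj z) w"
  by (simp add: RM_def transpose_def vec_eq_iff forall_2)

lemma RM_lin: "RM (complex_of_real p + \<i> * complex_of_real (om * q)) (complex_of_real q * w)
     = p *\<^sub>R RM 1 0 + q *\<^sub>R RM (\<i> * complex_of_real om) w"
  by (simp add: RM_def M2_scaleR M2_add M2_eq_iff algebra_simps)

lemma nonnormal_RM:
  assumes "\<not> normal_real (RM z w)" shows "w \<noteq> 0" "Im z \<noteq> 0"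
proof -
  have "w = 0 \<or> Im z = 0 \<Longrightarrow> normal_real (RM z w)"
  proof -
    assume h: "w = 0 \<or> Im z = 0"
    have "z * cnj z + w * cnj w = cnj z * z + w * cnj w" by simp
    moreover have "z * w + w * cnj (cnj z) = cnj z * w + w * cnj z" using h
      by (auto simp: complex_eq_iff)
    ultimately show ?thesis by (simp add: normal_real_def transpose_RM RM_mult)
  qed
  then show "w \<noteq> 0" "Im z \<noteq> 0" using assms by auto
qed

lemma RM_mv: "RM z w *v x = (\<chi> i. if i = 1 then Re (z * Complex (x$1) (x$2) + w * cnj (Complex (x$1) (x$2)))
                                 else Im (z * Complex (x$1) (x$2) + w * cnj (Complex (x$1) (x$2))))"
  by (simp add: RM_def M2_mv vec_eq_iff forall_2 algebra_simps)

lemma norm_RM_mv: "norm (RM z w *v x) = cmod (z * Complex (x$1) (x$2) + w * cnj (Complex (x$1) (x$2)))"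
  by (simp add: norm_vec2 RM_mv cmod_def)

lemma norm_real2: "norm (x :: real^2) = cmod (Complex (x$1) (x$2))"
  by (simp add: norm_vec2 cmod_def)

lemma opnorm_RM: "opnorm (RM z w) = cmod z + cmod w"
proof (rule antisym)
  show "opnorm (RM z w) \<le> cmod z + cmod w"
    unfolding opnorm_def
  proof (rule onorm_le)
    fix x :: "real^2"
    define \<xi> where "\<xi> = Complex (x$1) (x$2)"
    have "cmod (z * \<xi> + w * cnj \<xi>) \<le> cmod z * cmod \<xi> + cmod w * cmod \<xi>"
      by (rule order_trans[OF norm_triangle_ineq]) (simp add: norm_mult)
    then show "norm (RM z w *v x) \<le> (cmod z + cmod w) * norm x"
      unfolding norm_RM_mv norm_real2[of x] \<xi>_def[symmetric] by (simp add: algebra_simps)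
  qed
next
  define th where "th = (Arg w - Arg z) / 2"
  define x :: "real^2" where "x = (\<chi> i. if i = 1 then cos th else sin th)"
  have xc: "Complex (x$1) (x$2) = cis th" by (simp add: x_def complex_eq_iff)
  have nx: "norm x = 1" by (simp add: norm_real2 xc)
  have "z * cis th + w * cnj (cis th) = complex_of_real (cmod z + cmod w) * cis ((Arg z + Arg w)/2)"
  proof -
    have z: "z = complex_of_real (cmod z) * cis (Arg z)" using rcis_cmod_Arg[of z] by (simp add: rcis_def)
    have w: "w = complex_of_real (cmod w) * cis (Arg w)" using rcis_cmod_Arg[of w] by (simp add: rcis_def)
    have "z * cis th = complex_of_real (cmod z) * cis ((Arg z + Arg w)/2)"
      by (subst z) (simp add: cis_mult th_def field_simps)
    moreover have "w * cnj (cis th) = complex_of_real (cmod w) * cis ((Arg z + Arg w)/2)"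
      by (subst w) (simp add: cis_cnj cis_mult th_def field_simps)
    ultimately show ?thesis by (simp add: algebra_simps)
  qed
  then have "norm (RM z w *v x) = cmod (complex_of_real (cmod z + cmod w) * cis ((Arg z + Arg w)/2))"
    by (simp only: norm_RM_mv xc)
  also have "... = cmod z + cmod w" by (simp only: norm_mult norm_of_real norm_cis) simp
  finally have "norm (RM z w *v x) = cmod z + cmod w" .
  moreover have "norm (RM z w *v x) \<le> opnorm (RM z w) * norm x"
    unfolding opnorm_def by (rule onorm) simp
  ultimately show "cmod z + cmod w \<le> opnorm (RM z w)" using nx by simp
qed


primrec pq :: "real \<Rightarrow> real \<Rightarrow> nat \<Rightarrow> real \<times> real" where
  "pq al de 0 = (1, 0)"
| "pq al de (Suc k) = (al * fst (pq al de k) + de * snd (pq al de k), fst (pq al de k) + al * snd (pq al de k))"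

lemma matpow_RM:
  "matpow (RM z w) k = RM (complex_of_real (fst (pq (Re z) ((cmod w)^2 - (Im z)^2) k))
        + \<i> * complex_of_real (Im z * snd (pq (Re z) ((cmod w)^2 - (Im z)^2) k)))
      (complex_of_real (snd (pq (Re z) ((cmod w)^2 - (Im z)^2) k)) * w)"
proof (induction k)
  case 0 then show ?case by (simp add: RM_one)
next
  case (Suc k)
  have cw: "cmod w * cmod w = Re w * Re w + Im w * Im w" using cmod_power2[of w] by (simp add: power2_eq_square)
  show ?case
    by (simp add: Suc RM_mult complex_eq_iff power2_eq_square cw algebra_simps)
qed

lemma mexp_RM_gen:
  assumes "(\<lambda>k. fst (pq (Re z) ((cmod w)^2 - (Im z)^2) k) / fact k) sums c"
          "(\<lambda>k. snd (pq (Re z) ((cmod w)^2 - (Im z)^2) k) / fact k) sums s"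
  shows "mexp (RM z w) = RM (complex_of_real c + \<i> * complex_of_real (Im z * s)) (complex_of_real s * w)"
proof -
  let ?P = "\<lambda>k. fst (pq (Re z) ((cmod w)^2 - (Im z)^2) k)"
  let ?Q = "\<lambda>k. snd (pq (Re z) ((cmod w)^2 - (Im z)^2) k)"
  have "(\<lambda>k. (?P k / fact k) *\<^sub>R RM 1 0 + (?Q k / fact k) *\<^sub>R RM (\<i> * complex_of_real (Im z)) w)
        sums (c *\<^sub>R RM 1 0 + s *\<^sub>R RM (\<i> * complex_of_real (Im z)) w)"
    by (intro sums_add sums_scaleR_left assms)
  moreover have "(\<lambda>k. (1 / fact k) *\<^sub>R matpow (RM z w) k) =
      (\<lambda>k. (?P k / fact k) *\<^sub>R RM 1 0 + (?Q k / fact k) *\<^sub>R RM (\<i> * complex_of_real (Im z)) w)"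
    by (rule ext) (simp only: matpow_RM RM_lin, simp add: scaleR_add_right)
  ultimately have "(\<lambda>k. (1 / fact k) *\<^sub>R matpow (RM z w) k) sums (c *\<^sub>R RM 1 0 + s *\<^sub>R RM (\<i> * complex_of_real (Im z)) w)"
    by simp
  then show ?thesis unfolding mexp_def RM_lin[symmetric] by (rule sums_unique[symmetric])
qed

lemma pq_ell:
  assumes "de = - (mu^2)"
  shows "complex_of_real (fst (pq al de k)) + \<i> * complex_of_real (mu * snd (pq al de k)) = (complex_of_real al + \<i> * complex_of_real mu)^k"
proof (induction k)
  case 0 then show ?case by simp
next
  case (Suc k)
  show ?case unfolding power_Suc Suc[symmetric] using assms
    by (simp add: complex_eq_iff power2_eq_square algebra_simps)
qed

lemma pq_hyp:
  assumes "de = nu^2"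
  shows "fst (pq al de k) + nu * snd (pq al de k) = (al + nu)^k \<and> fst (pq al de k) - nu * snd (pq al de k) = (al - nu)^k"
proof (induction k)
  case 0 then show ?case by simp
next
  case (Suc k)
  then have h: "fst (pq al de k) + nu * snd (pq al de k) = (al + nu)^k" "fst (pq al de k) - nu * snd (pq al de k) = (al - nu)^k" by auto
  show ?case unfolding power_Suc h[symmetric] using assms by (simp add: power2_eq_square algebra_simps)
qed

lemma pq_par: "fst (pq al 0 k) = al^k \<and> snd (pq al 0 k) = of_nat k * al^(k - 1)"
proof (induction k)
  case 0 then show ?case by simp
next
  case (Suc k) then show ?case by (cases k) (simp_all add: algebra_simps)
qed

lemma exp_sums_real: "(\<lambda>k. (x::real)^k / fact k) sums exp x"
  using exp_converges[of x] by (simp add: divide_inverse mult.commute)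

lemma mexp_RM_ell:
  assumes "(cmod w)^2 - (Im z)^2 < 0"
  defines "mu \<equiv> sqrt ((Im z)^2 - (cmod w)^2)"
  shows "mexp (RM z w) = RM (complex_of_real (exp (Re z) * cos mu) + \<i> * complex_of_real (Im z * (exp (Re z) * sin mu / mu)))
             (complex_of_real (exp (Re z) * sin mu / mu) * w)"
proof -
  define de where "de = (cmod w)^2 - (Im z)^2"
  have mu0: "mu > 0" using assms by (simp add: mu_def)
  have de: "de = - (mu^2)" using assms by (simp add: mu_def de_def)
  define L where "L = complex_of_real (Re z) + \<i> * complex_of_real mu"
  have PQ: "\<And>k. fst (pq (Re z) de k) = Re (L^k)" "\<And>k. snd (pq (Re z) de k) = Im (L^k) / mu"
    using pq_ell[OF de, of "Re z"] mu0 by (simp_all add: L_def[symmetric] complex_eq_iff[of "_ + _"])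
      (metis Im_complex_of_real Re_complex_of_real add.right_neutral add_cancel_right_left complex_i_mult_minus mult_zero_left
       Im_i_times Re_i_times  diff_zero mult.commute nonzero_mult_div_cancel_right order_less_irrefl)+
  have sL: "(\<lambda>k. L^k /\<^sub>R fact k) sums exp L" by (rule exp_converges)
  have s1: "(\<lambda>k. Re (L^k) / fact k) sums Re (exp L)"
    using bounded_linear.sums[OF bounded_linear_Re sL] by (simp add: divide_inverse mult.commute)
  have s2: "(\<lambda>k. Im (L^k) / mu / fact k) sums (Im (exp L) / mu)"
    using sums_divide[OF bounded_linear.sums[OF bounded_linear_Im sL], of mu] by (simp add: divide_inverse mult_ac)
  have "mexp (RM z w) = RM (complex_of_real (Re (exp L)) + \<i> * complex_of_real (Im z * (Im (exp L) / mu))) (complex_of_real (Im (exp L) / mu) * w)"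
    by (rule mexp_RM_gen) (use s1 s2 PQ in \<open>simp_all add: de_def\<close>)
  then show ?thesis by (simp add: Re_exp Im_exp L_def)
qed

lemma cosh_real_exp: "cosh (x::real) = (exp x + exp (-x)) / 2"
  by (simp add: cosh_def)

lemma sinh_real_exp: "sinh (x::real) = (exp x - exp (-x)) / 2"
  by (simp add: sinh_def)

lemma mexp_RM_hyp:
  assumes "(cmod w)^2 - (Im z)^2 > 0"
  defines "nu \<equiv> sqrt ((cmod w)^2 - (Im z)^2)"
  shows "mexp (RM z w) = RM (complex_of_real (exp (Re z) * cosh nu) + \<i> * complex_of_real (Im z * (exp (Re z) * sinh nu / nu)))
             (complex_of_real (exp (Re z) * sinh nu / nu) * w)"
proof -
  define de where "de = (cmod w)^2 - (Im z)^2"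
  define al where "al = Re z"
  have nu0: "nu > 0" using assms by (simp add: nu_def)
  have de: "de = nu^2" using assms by (simp add: nu_def de_def)
  have PQk: "fst (pq al de k) = ((al + nu)^k + (al - nu)^k) / 2 \<and> snd (pq al de k) = ((al + nu)^k - (al - nu)^k) / (2 * nu)" for k
  proof -
    from pq_hyp[OF de, of al k] have h1: "fst (pq al de k) + nu * snd (pq al de k) = (al + nu)^k"
      and h2: "fst (pq al de k) - nu * snd (pq al de k) = (al - nu)^k" by auto
    have "fst (pq al de k) * 2 = (al + nu)^k + (al - nu)^k" using h1 h2 by linarith
    moreover have "nu * snd (pq al de k) * 2 = (al + nu)^k - (al - nu)^k" using h1 h2 by linarith
    ultimately show ?thesis using nu0 by (simp add: field_simps)
  qed
  have P: "\<And>k. fst (pq al de k) / fact k = ((al + nu)^k / fact k + (al - nu)^k / fact k) / 2"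
    by (simp add: PQk add_divide_distrib)
  have Q: "\<And>k. snd (pq al de k) / fact k = ((al + nu)^k / fact k - (al - nu)^k / fact k) / (2 * nu)"
    by (simp add: PQk diff_divide_distrib ac_simps)
  have s1: "(\<lambda>k. fst (pq al de k) / fact k) sums ((exp (al + nu) + exp (al - nu)) / 2)"
    unfolding P by (intro sums_divide sums_add exp_sums_real)
  have s2: "(\<lambda>k. snd (pq al de k) / fact k) sums ((exp (al + nu) - exp (al - nu)) / (2 * nu))"
    unfolding Q by (intro sums_divide sums_diff exp_sums_real)
  have c: "(exp (al + nu) + exp (al - nu)) / 2 = exp al * cosh nu"
    by (simp add: cosh_real_exp exp_add exp_diff exp_minus field_simps)
  have s: "(exp (al + nu) - exp (al - nu)) / (2 * nu) = exp al * sinh nu / nu"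
    using nu0 by (simp add: sinh_real_exp exp_add exp_diff exp_minus field_simps)
  show ?thesis
    by (rule mexp_RM_gen) (use s1 s2 c s in \<open>simp_all add: de_def al_def\<close>)
qed

lemma mexp_RM_par:
  assumes "(cmod w)^2 - (Im z)^2 = 0"
  shows "mexp (RM z w) = RM (complex_of_real (exp (Re z)) + \<i> * complex_of_real (Im z * exp (Re z)))
             (complex_of_real (exp (Re z)) * w)"
proof -
  define al where "al = Re z"
  have s1: "(\<lambda>k. fst (pq al 0 k) / fact k) sums exp al"
    using exp_sums_real[of al] pq_par by simp
  have s2: "(\<lambda>k. snd (pq al 0 k) / fact k) sums exp al"
  proof -
    have "(\<lambda>k. snd (pq al 0 (Suc k)) / fact (Suc k)) = (\<lambda>k. al^k / fact k)"
    proof (rule ext)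
      fix k show "snd (pq al 0 (Suc k)) / fact (Suc k) = al^k / fact k"
        by (simp only: pq_par) (simp add: fact_Suc field_simps del: of_nat_Suc)
    qed
    then have "(\<lambda>k. snd (pq al 0 (Suc k)) / fact (Suc k)) sums exp al" using exp_sums_real by simp
    then have "(\<lambda>k. snd (pq al 0 k) / fact k) sums (exp al + snd (pq al 0 0) / fact 0)"
      by (rule sums_Suc_iff[where f="\<lambda>k. snd (pq al 0 k) / fact k", THEN iffD1])
    then show ?thesis by simp
  qed
  show ?thesis
    by (rule mexp_RM_gen) (use s1 s2 assms in \<open>simp_all add: al_def\<close>)
qed


lemma mexp_conformal: "mexp (RM (complex_of_real al + \<i> * complex_of_real ph) 0) = RM (complex_of_real (exp al) * cis ph) 0"
proof (cases "ph = 0")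
  case True
  then show ?thesis using mexp_RM_par[of 0 "complex_of_real al + \<i> * complex_of_real ph"] by simp
next
  case False
  have "(cmod 0)^2 - (Im (complex_of_real al + \<i> * complex_of_real ph))^2 < 0" using False by simp
  from mexp_RM_ell[OF this] have "mexp (RM (complex_of_real al + \<i> * complex_of_real ph) 0) =
      RM (complex_of_real (exp al * cos \<bar>ph\<bar>) + \<i> * complex_of_real (ph * (exp al * sin \<bar>ph\<bar> / \<bar>ph\<bar>))) 0"
    by simp
  also have "... = RM (complex_of_real (exp al) * cis ph) 0"
  proof -
    have "ph * sin \<bar>ph\<bar> / \<bar>ph\<bar> = sin ph" using False by (cases "ph > 0") (simp_all add: field_simps)
    moreover have "ph * (exp al * sin \<bar>ph\<bar> / \<bar>ph\<bar>) = exp al * (ph * sin \<bar>ph\<bar> / \<bar>ph\<bar>)" by (simp add: mult_ac)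
    ultimately have "ph * (exp al * sin \<bar>ph\<bar> / \<bar>ph\<bar>) = exp al * sin ph" by simp
    then show ?thesis by (simp add: complex_eq_iff cis.sel)
  qed
  finally show ?thesis .
qed

lemma mexp_anticonformal:
  assumes "r \<ge> 0" "cmod v = 1"
  shows "mexp (RM 0 (complex_of_real r * v)) = RM (complex_of_real (cosh r)) (complex_of_real (sinh r) * v)"
proof (cases "r = 0")
  case True
  then show ?thesis using mexp_RM_par[of "complex_of_real r * v" 0] by simp
next
  case False
  then have r0: "r > 0" using assms by simp
  have "(cmod (complex_of_real r * v))^2 - (Im 0)^2 > 0" using r0 assms by (simp add: norm_mult)
  from mexp_RM_hyp[OF this] show ?thesis using r0 assms by (simp add: norm_mult)
qed

lemma polar_good:
  assumes em: "mexp (RM z w) = RM (complex_of_real (exp (Re z)) * m0) (complex_of_real (exp (Re z)) * n0)"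
      and det: "(cmod m0)^2 - (cmod n0)^2 = 1"
      and hn: "cmod n0 < sinh (cmod w)"
      and ha: "\<bar>Arg m0\<bar> < \<bar>Im z\<bar>"
  shows "good (RM z w)"
proof -
  define al where "al = Re z"
  define rho where "rho = arsinh (cmod n0)"
  define ph where "ph = Arg m0"
  have m0: "m0 \<noteq> 0" using det by (auto simp: power2_eq_square) (smt (verit) norm_ge_zero mult_nonneg_nonneg)
  define v where "v = (if n0 = 0 then 1 else n0 / (complex_of_real (cmod n0) * cis ph))"
  have v1: "cmod v = 1" by (auto simp: v_def norm_divide norm_mult)
  have "\<not> arsinh (cmod n0) < 0" by simp
  then have rho0: "rho \<ge> 0" unfolding rho_def by linarith
  define C where "C = RM (complex_of_real al + \<i> * complex_of_real ph) 0"
  define S where "S = RM 0 (complex_of_real rho * v)"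
  have eC: "mexp C = RM (complex_of_real (exp al) * cis ph) 0" by (simp add: C_def mexp_conformal)
  have eS: "mexp S = RM (complex_of_real (cosh rho)) (complex_of_real (sinh rho) * v)"
    by (simp add: S_def mexp_anticonformal[OF rho0 v1])
  have ch: "cosh rho = cmod m0"
  proof -
    have "cosh rho = sqrt ((cmod n0)^2 + 1)" by (simp add: rho_def cosh_arsinh_real)
    also have "(cmod n0)^2 + 1 = (cmod m0)^2" using det by simp
    finally show ?thesis by simp
  qed
  have sh: "sinh rho = cmod n0" by (simp add: rho_def)
  have p1: "cis ph * complex_of_real (cosh rho) = m0"
    using m0 by (simp add: ph_def ch cis_Arg complex_sgn_def scaleR_conv_of_real field_simps)
  have p2: "cis ph * (complex_of_real (sinh rho) * v) = n0"
    by (cases "n0 = 0") (simp_all add: sh v_def field_simps)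
  have prod: "fold (\<lambda>B P. mexp B ** P) [S, C] (mat 1) = mexp (RM z w)"
  proof -
    have "fold (\<lambda>B P. mexp B ** P) [S, C] (mat 1) = mexp C ** mexp S" by simp
    also have "... = RM (complex_of_real (exp al) * (cis ph * complex_of_real (cosh rho)))
                        (complex_of_real (exp al) * (cis ph * (complex_of_real (sinh rho) * v)))"
      by (simp add: eC eS RM_mult mult.assoc)
    also have "... = mexp (RM z w)" by (simp add: p1 p2 em al_def)
    finally show ?thesis .
  qed
  have c1: "rho < cmod w"
  proof -
    have "arsinh (cmod n0) < arsinh (sinh (cmod w))" using hn by simp
    then show ?thesis by (simp add: rho_def arsinh_sinh_real)
  qed
  have c2: "cmod (complex_of_real al + \<i> * complex_of_real ph) < cmod z"
  proof -
    have "\<bar>ph\<bar>^2 < \<bar>Im z\<bar>^2" using ha unfolding ph_def by (intro power_strict_mono) auto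
    then have "ph^2 < (Im z)^2" by simp
    then have "al^2 + ph^2 < (Re z)^2 + (Im z)^2" by (simp add: al_def)
    then show ?thesis by (simp add: cmod_def)
  qed
  have cost: "opnorm S + opnorm C < opnorm (RM z w)"
    using c1 c2 rho0 v1 by (simp add: S_def C_def opnorm_RM norm_mult)
  show ?thesis unfolding good_def
    by (rule exI[of _ "[S, C]"]) (use prod cost in simp)
qed


lemma abs_sin_lt: assumes "(m::real) > 0" shows "\<bar>sin m\<bar> < m"
proof (cases "m \<le> 1")
  case True
  then have "sin m > 0" using assms pi_ge_two by (intro sin_gt_zero) auto
  then show ?thesis using sin_lt_self[OF assms] by simp
next
  case False then show ?thesis using abs_sin_le_one[of m] by linarith
qed

lemma sin_abs_Arg: assumes "z \<noteq> 0" shows "sin \<bar>Arg z\<bar> = \<bar>Im z\<bar> / cmod z"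
proof -
  have s: "sin (Arg z) = Im z / cmod z" by (rule sin_Arg[OF assms])
  have nz: "cmod z > 0" using assms by simp
  show ?thesis
  proof (cases "Arg z \<ge> 0")
    case True
    then have "sin (Arg z) \<ge> 0" using Arg_bounded[of z] by (intro sin_ge_zero) auto
    then have "Im z \<ge> 0" using s nz by (simp add: zero_le_divide_iff)
    then show ?thesis using True s by simp
  next
    case False
    then have "sin (- Arg z) \<ge> 0" using Arg_bounded[of z] by (intro sin_ge_zero) auto
    then have "Im z \<le> 0" using s nz by (simp add: divide_le_0_iff)
    then show ?thesis using False s by simp
  qed
qed

lemma real_ell:
  assumes w0: "w \<noteq> 0" and om0: "Im z \<noteq> 0" and de: "(cmod w)^2 - (Im z)^2 < 0"
  shows "good (RM z w)"
proof -
  define mu where "mu = sqrt ((Im z)^2 - (cmod w)^2)"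
  define W where "W = \<bar>Im z\<bar>"
  have mu0: "mu > 0" using de by (simp add: mu_def)
  have mu2: "mu^2 = (Im z)^2 - (cmod w)^2" using de by (simp add: mu_def)
  have muW: "mu < W"
  proof -
    have "mu^2 < W^2" using mu2 w0 by (simp add: W_def)
    then show ?thesis by (rule power_less_imp_less_base) (simp add: W_def)
  qed
  define m0 where "m0 = Complex (cos mu) (Im z * sin mu / mu)"
  define n0 where "n0 = complex_of_real (sin mu / mu) * w"
  have em: "mexp (RM z w) = RM (complex_of_real (exp (Re z)) * m0) (complex_of_real (exp (Re z)) * n0)"
    using mexp_RM_ell[OF de] by (simp add: mu_def[symmetric] m0_def n0_def complex_eq_iff algebra_simps)
  have det: "(cmod m0)^2 - (cmod n0)^2 = 1"
  proof -
    have a: "(cmod m0)^2 = (cos mu)^2 + (Im z)^2 * (sin mu / mu)^2"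
      by (simp add: m0_def cmod_power2 power_mult_distrib power_divide)
    have "cmod n0 = \<bar>sin mu / mu\<bar> * cmod w" unfolding n0_def norm_mult norm_of_real ..
    then have b: "(cmod n0)^2 = (sin mu / mu)^2 * (cmod w)^2" by (simp only: power_mult_distrib power2_abs)
    have c: "(sin mu / mu)^2 * mu^2 = (sin mu)^2" using mu0 by (simp add: power_divide)
    have "(cmod m0)^2 - (cmod n0)^2 = (cos mu)^2 + (sin mu / mu)^2 * ((Im z)^2 - (cmod w)^2)"
      by (simp add: a b algebra_simps)
    also have "... = (cos mu)^2 + (sin mu)^2" by (simp only: mu2[symmetric] c)
    also have "... = 1" by simp
    finally show ?thesis .
  qed
  have hn: "cmod n0 < sinh (cmod w)"
  proof -
    have "cmod n0 = \<bar>sin mu / mu\<bar> * cmod w" unfolding n0_def norm_mult norm_of_real ..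
    also have "... = \<bar>sin mu\<bar> / mu * cmod w" using mu0 by (simp add: abs_divide)
    also have "... < 1 * cmod w" using abs_sin_lt[OF mu0] mu0 w0 by (intro mult_strict_right_mono) auto
    also have "... < sinh (cmod w)" using self_lt_sinh[of "cmod w"] w0 by simp
    finally show ?thesis .
  qed
  have ha: "\<bar>Arg m0\<bar> < W"
  proof (cases "W > pi")
    case True then show ?thesis using Arg_bounded[of m0] by (smt (verit))
  next
    case False
    then have Wpi: "W \<le> pi" by simp
    have smu: "sin mu > 0" using mu0 muW Wpi by (intro sin_gt_zero) auto
    have Im0: "Im m0 \<noteq> 0" using om0 smu mu0 by (simp add: m0_def)
    then have m00: "m0 \<noteq> 0" by auto
    define th where "th = \<bar>Arg m0\<bar>"
    have "cos th = Re m0 / cmod m0" using cos_Arg[OF m00] by (simp add: th_def)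
    moreover have "Re m0 = cos mu" by (simp add: m0_def)
    ultimately have cth: "cos th = cos mu / cmod m0" by simp
    have "sin th = \<bar>Im m0\<bar> / cmod m0" using sin_abs_Arg[OF m00] by (simp add: th_def)
    moreover have "\<bar>Im m0\<bar> = W * sin mu / mu" using smu mu0 by (simp add: m0_def W_def abs_mult abs_divide)
    ultimately have sth: "sin th = W * sin mu / mu / cmod m0" by simp
    have key: "W * cos W * sin mu < mu * cos mu * sin W"
    proof (cases "W = pi")
      case True then show ?thesis using smu pi_gt_zero by simp
    next
      case False then show ?thesis using xcot_decr[OF mu0 muW] Wpi by simp
    qed
    have nm: "cmod m0 > 0" using m00 by simp
    have pos: "sin (W - th) > 0"
    proof -
      have "sin (W - th) = (sin W * cos mu - cos W * (W * sin mu / mu)) / cmod m0"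
        using mu0 nm by (simp add: sin_diff cth sth field_simps)
      also have "... = (mu * cos mu * sin W - W * cos W * sin mu) / (mu * cmod m0)"
        using mu0 nm by (simp add: field_simps)
      finally show ?thesis using key mu0 nm by simp
    qed
    show ?thesis
    proof (rule ccontr)
      assume "\<not> \<bar>Arg m0\<bar> < W"
      then have "th \<ge> W" by (simp add: th_def)
      moreover have "th \<le> pi" using Arg_bounded[of m0] by (simp add: th_def abs_le_iff)
      moreover have "W > 0" using om0 by (simp add: W_def)
      ultimately have "sin (th - W) \<ge> 0" by (intro sin_ge_zero) auto
      then have "sin (W - th) \<le> 0" by (metis minus_diff_eq neg_0_le_iff_le sin_minus)
      then show False using pos by simp
    qed
  qed
  show ?thesis by (rule polar_good[OF em det hn]) (use ha in \<open>simp add: W_def\<close>)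
qed

lemma real_hyp:
  assumes w0: "w \<noteq> 0" and om0: "Im z \<noteq> 0" and de: "(cmod w)^2 - (Im z)^2 > 0"
  shows "good (RM z w)"
proof -
  define nu where "nu = sqrt ((cmod w)^2 - (Im z)^2)"
  have nu0: "nu > 0" using de by (simp add: nu_def)
  have nu2: "nu^2 = (cmod w)^2 - (Im z)^2" using de by (simp add: nu_def)
  have nuw: "nu < cmod w"
  proof -
    have "nu^2 < (cmod w)^2" using nu2 om0 by simp
    then show ?thesis using nu0 by (simp add: power_less_imp_less_base)
  qed
  define m0 where "m0 = Complex (cosh nu) (Im z * sinh nu / nu)"
  define n0 where "n0 = complex_of_real (sinh nu / nu) * w"
  have em: "mexp (RM z w) = RM (complex_of_real (exp (Re z)) * m0) (complex_of_real (exp (Re z)) * n0)"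
    using mexp_RM_hyp[OF de] by (simp add: nu_def[symmetric] m0_def n0_def complex_eq_iff algebra_simps)
  have det: "(cmod m0)^2 - (cmod n0)^2 = 1"
  proof -
    have a: "(cmod m0)^2 = (cosh nu)^2 + (Im z)^2 * (sinh nu / nu)^2"
      by (simp add: m0_def cmod_power2 power_mult_distrib power_divide)
    have "cmod n0 = \<bar>sinh nu / nu\<bar> * cmod w" unfolding n0_def norm_mult norm_of_real ..
    then have b: "(cmod n0)^2 = (sinh nu / nu)^2 * (cmod w)^2" by (simp only: power_mult_distrib power2_abs)
    have c: "(sinh nu / nu)^2 * nu^2 = (sinh nu)^2" using nu0 by (simp add: power_divide)
    have "(cmod m0)^2 - (cmod n0)^2 = (cosh nu)^2 - (sinh nu / nu)^2 * ((cmod w)^2 - (Im z)^2)"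
      by (simp add: a b algebra_simps)
    also have "... = (cosh nu)^2 - (sinh nu)^2" by (simp only: nu2[symmetric] c)
    also have "... = 1" by (simp add: cosh_square_eq)
    finally show ?thesis .
  qed
  have hn: "cmod n0 < sinh (cmod w)"
  proof -
    have "cmod n0 = \<bar>sinh nu / nu\<bar> * cmod w" unfolding n0_def norm_mult norm_of_real ..
    also have "... = sinh nu / nu * cmod w" using nu0 by (simp add: abs_divide)
    also have "... < sinh (cmod w) / cmod w * cmod w"
      using sinhx_over_x_mono[OF nu0 nuw] w0 by (intro mult_strict_right_mono) auto
    also have "... = sinh (cmod w)" using w0 by simp
    finally show ?thesis .
  qed
  have ha: "\<bar>Arg m0\<bar> < \<bar>Im z\<bar>"
  proof -
    have "Re m0 > 0" by (simp add: m0_def)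
    then have "Arg m0 = arctan (Im m0 / Re m0)" by (rule arg_conv_arctan)
    then have "\<bar>Arg m0\<bar> \<le> \<bar>Im m0 / Re m0\<bar>" by (simp only:) (rule abs_arctan_le)
    also have "\<bar>Im m0 / Re m0\<bar> = \<bar>Im z\<bar> * (sinh nu / (nu * cosh nu))"
      using nu0 by (simp add: m0_def abs_mult abs_divide)
    also have "... < \<bar>Im z\<bar> * 1"
    proof -
      have "sinh nu / (nu * cosh nu) < 1" using sinh_lt_x_cosh[OF nu0] nu0 by simp
      then show ?thesis using om0 by (intro mult_strict_left_mono) auto
    qed
    finally show ?thesis by simp
  qed
  show ?thesis by (rule polar_good[OF em det hn ha])
qed

lemma real_par:
  assumes w0: "w \<noteq> 0" and om0: "Im z \<noteq> 0" and de: "(cmod w)^2 - (Im z)^2 = 0"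
  shows "good (RM z w)"
proof -
  define m0 where "m0 = Complex 1 (Im z)"
  have em: "mexp (RM z w) = RM (complex_of_real (exp (Re z)) * m0) (complex_of_real (exp (Re z)) * w)"
    using mexp_RM_par[OF de] by (simp add: m0_def complex_eq_iff algebra_simps)
  have det: "(cmod m0)^2 - (cmod w)^2 = 1" using de by (simp add: m0_def cmod_power2)
  have hn: "cmod w < sinh (cmod w)" using self_lt_sinh[of "cmod w"] w0 by simp
  have ha: "\<bar>Arg m0\<bar> < \<bar>Im z\<bar>"
  proof -
    have "Arg m0 = arctan (Im m0 / Re m0)" by (rule arg_conv_arctan) (simp add: m0_def)
    then show ?thesis using abs_arctan_lt[OF om0] by (simp add: m0_def)
  qed
  show ?thesis by (rule polar_good[OF em det hn ha])
qed

theorem real_part: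
  fixes A :: "real^2^2"
  assumes "\<not> normal_real A"
  shows "magnus (mexp A) < ereal (opnorm A)"
proof -
  obtain z w where A: "A = RM z w" using RM_eta by metis
  have w0: "w \<noteq> 0" and om0: "Im z \<noteq> 0" using nonnormal_RM assms A by auto
  have "good (RM z w)"
  proof (cases "(cmod w)^2 - (Im z)^2" "0::real" rule: linorder_cases)
    case less then show ?thesis by (rule real_ell[OF w0 om0])
  next
    case equal then show ?thesis by (rule real_par[OF w0 om0])
  next
    case greater then show ?thesis by (rule real_hyp[OF w0 om0])
  qed
  then show ?thesis using A good_imp by simp
qed


theorem theorem5p1:
  shows "(\<forall>A :: real^2^2. \<not> normal_real A \<longrightarrow> magnus (mexp A) < ereal (opnorm A)) \<and>
         (\<forall>A :: complex^2^2. \<not> normal_complex A \<longrightarrow> magnus (mexp A) < ereal (opnorm A))"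
  using real_part complex_part by blast

end
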